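(* Let $(\mathcal{G},v_0)$ be an initialized quantitative reachability game and $(\mathcal{X},x_0)$ its initialized extended game. A play $\rho^0\in\mathrm{Plays}_X(x_0)$ is the outcome of a subgame perfect equilibrium in $(\mathcal{X},x_0)$ if and only if $\rho^0\in\Lambda^*(x_0)$.
   Context: Games: an arena $G=(\Pi,V,(V_i)_{i\in\Pi},E)$ has finite player set $\Pi$, finite vertex set $V$ ($|V|\ge2$, $|\Pi|\le|V|$), a partition $(V_i)$ of $V$, and edges $E$ with every vertex having a successor. Plays are infinite paths, histories finite ones. A quantitative reachability game has target sets $F_i\subseteq V$ and $\mathrm{Cost}_i(\rho)=$ least $k$ with $\rho_k\in F_i$ (or $+\infty$). Strategies map histories ending in $V_i$ to successors; a profile $\sigma$ has outcome $\langle\sigma\rangle_{v_0}$ from $v_0$. $\sigma$ is a Nash equilibrium if no player $i$ can strictly decrease $\mathrm{Cost}_i$ of the outcome by changing only his own strategy; it is a subgame perfect equilibrium (SPE) if for every history $hv$ from the initial vertex, the profile $\sigma_{|h}$ ($\sigma_{i|h}(h')=\sigma_i(hh')$) is a Nash equilibrium in the subgame from $v$ with costs $\rho\mapsto\mathrm{Cost}_i(h\rho)$. Extended game: $\mathcal{X}$ is the reachability game on the arena $X=(\Pi,V^X,(V^X_i),E^X)$ with $V^X=V\times 2^\Pi$, $((v,I),(v',I'))\in E^X$ iff $(v,v')\in E$ and $I'=I\cup\{i\in\Pi: v'\in F_i\}$, $(v,I)\in V^X_i$ iff $v\in V_i$, target sets $F^X_i=\{(v,I): i\in I\}$, and reachability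 costs $\mathrm{Cost}_i$ with respect to these targets; $x_0=(v_0,I_0)$ with $I_0=\{i: v_0\in F_i\}$. For $u\in V^X$, $I(u)$ is its second component; $\mathrm{Plays}_X(u)$ are the plays of $X$ from $u$. Let $\mathcal{I}$ be the set of sets $I$ such that some $(v,I)$ is reachable from $x_0$, $N=|\mathcal{I}|$; the relation $I<I'$ iff $I\ne I'$ and some $(v',I')$ is reachable from some $(v,I)$ is a partial order on $\mathcal{I}$, and a fixed total order $J_1<\dots<J_N$ of $\mathcal{I}$ extends it. $V^{\ge J_n}=\{(v,J_m): v\in V, m\ge n\}$. Labelings: for $\lambda:V^X\to\mathbb{N}\cup\{+\infty\}$, a play $\rho$ of $X$ is $\lambda$-consistent if $\mathrm{Cost}_i(\rho_{\ge n})\le\lambda(\rho_n)$ for all $n$ and all $i$ with $\rho_n\in V^X_i$ (where $\rho_{\ge n}=\rho_n\rho_{n+1}\dots$). The sequence $(\lambda^k)$: $\lambda^0(u)=0$ if $u\in V^X_i$ and $i\in I(u)$, and $+\infty$ otherwise. The update of $\lambda^k$ w.r.t. $V^{\ge J_n}$ is $\lambda^{k+1}$ with $\lambda^{k+1}(u)=\lambda^k(u)$ for $u\notin V^{\ge J_n}$, and for $u\in V^{\ge J_n}\cap V^X_i$: $\lambda^{k+1}(u)=0$ if $i\in I(u)$, otherwise $\lambda^{k+1}(u)=1+\min_{(u,u')\in E^X}\sup\{\mathrm{Cost}_i(\rho):\rho\in\Lambda^k(u')\}$ (with $1+(+\infty)=+\infty$), where $\Lambda^k(u')$ is the set of $\lambda^k$-consistent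 plays from $u'$. The sequence is generated with $n_0=N$, $\lambda^{k+1}=$ update of $\lambda^k$ w.r.t. $V^{\ge J_{n_k}}$, and $n_{k+1}=n_k-1$ if $\lambda^{k+1}=\lambda^k$ and $n_k>1$, $n_{k+1}=n_k$ otherwise. This sequence eventually becomes constant: there is $k^*$ with $\lambda^{k^*+m}=\lambda^{k^*}$ for all $m$; $\lambda^*:=\lambda^{k^*}$ and $\Lambda^*(u)$ is the set of $\lambda^*$-consistent plays from $u$. *)

theory Defs
  imports Main "HOL-Library.Extended_Nat"
begin

text \<open>An arena is given by a player set Pi, a vertex set V, an owner function
  (encoding the partition (V_i)), and an edge relation E.\<close>

definition arena :: "'p set \<Rightarrow> 'a set \<Rightarrow> ('a \<Rightarrow> 'p) \<Rightarrow> ('a \<times> 'a) set \<Rightarrow> bool" where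
  "arena Pi V owner E \<longleftrightarrow>
     finite Pi \<and> finite V \<and> 2 \<le> card V \<and> card Pi \<le> card V \<and>
     (\<forall>v\<in>V. owner v \<in> Pi) \<and> E \<subseteq> V \<times> V \<and> (\<forall>v\<in>V. \<exists>v'. (v, v') \<in> E)"

definition is_play :: "('a \<times> 'a) set \<Rightarrow> (nat \<Rightarrow> 'a) \<Rightarrow> bool" where
  "is_play E \<rho> \<longleftrightarrow> (\<forall>n. (\<rho> n, \<rho> (Suc n)) \<in> E)"

definition plays_from :: "('a \<times> 'a) set \<Rightarrow> 'a \<Rightarrow> (nat \<Rightarrow> 'a) set" where
  "plays_from E v = {\<rho>. is_play E \<rho> \<and> \<rho> 0 = v}"

definition is_hist :: "'a set \<Rightarrow> ('a \<times> 'a) set \<Rightarrow> 'a list \<Rightarrow> bool" where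
  "is_hist V E h \<longleftrightarrow> h \<noteq> [] \<and> set h \<subseteq> V \<and> (\<forall>k. Suc k < length h \<longrightarrow> (h ! k, h ! Suc k) \<in> E)"

definition cost :: "('p \<Rightarrow> 'a set) \<Rightarrow> 'p \<Rightarrow> (nat \<Rightarrow> 'a) \<Rightarrow> enat" where
  "cost F i \<rho> = (if \<exists>k. \<rho> k \<in> F i then enat (LEAST k. \<rho> k \<in> F i) else \<infinity>)"

definition suffix_play :: "(nat \<Rightarrow> 'a) \<Rightarrow> nat \<Rightarrow> (nat \<Rightarrow> 'a)" where
  "suffix_play \<rho> n = (\<lambda>k. \<rho> (n + k))"

definition prepend :: "'a list \<Rightarrow> (nat \<Rightarrow> 'a) \<Rightarrow> (nat \<Rightarrow> 'a)" where
  "prepend h \<rho> = (\<lambda>n. if n < length h then h ! n else \<rho> (n - length h))"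

definition valid_strategy :: "'a set \<Rightarrow> ('a \<Rightarrow> 'p) \<Rightarrow> ('a \<times> 'a) set \<Rightarrow> 'p \<Rightarrow> ('a list \<Rightarrow> 'a) \<Rightarrow> bool" where
  "valid_strategy V owner E i \<sigma>i \<longleftrightarrow>
     (\<forall>h. is_hist V E h \<and> owner (last h) = i \<longrightarrow> (last h, \<sigma>i h) \<in> E)"

definition valid_profile :: "'p set \<Rightarrow> 'a set \<Rightarrow> ('a \<Rightarrow> 'p) \<Rightarrow> ('a \<times> 'a) set \<Rightarrow> ('p \<Rightarrow> 'a list \<Rightarrow> 'a) \<Rightarrow> bool" where
  "valid_profile Pi V owner E \<sigma> \<longleftrightarrow> (\<forall>i\<in>Pi. valid_strategy V owner E i (\<sigma> i))"

primrec out_hist :: "('a \<Rightarrow> 'p) \<Rightarrow> ('p \<Rightarrow> 'a list \<Rightarrow> 'a) \<Rightarrow> 'a \<Rightarrow> nat \<Rightarrow> 'a list" where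
  "out_hist owner \<sigma> v 0 = [v]"
| "out_hist owner \<sigma> v (Suc n) =
     out_hist owner \<sigma> v n @ [\<sigma> (owner (last (out_hist owner \<sigma> v n))) (out_hist owner \<sigma> v n)]"

definition outcome :: "('a \<Rightarrow> 'p) \<Rightarrow> ('p \<Rightarrow> 'a list \<Rightarrow> 'a) \<Rightarrow> 'a \<Rightarrow> (nat \<Rightarrow> 'a)" where
  "outcome owner \<sigma> v = (\<lambda>n. last (out_hist owner \<sigma> v n))"

definition restrict_profile :: "('p \<Rightarrow> 'a list \<Rightarrow> 'a) \<Rightarrow> 'a list \<Rightarrow> ('p \<Rightarrow> 'a list \<Rightarrow> 'a)" where
  "restrict_profile \<sigma> h = (\<lambda>i h'. \<sigma> i (h @ h'))"

text \<open>Nash equilibrium in the subgame from v reached after prefix h,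
  with costs rho |-> Cost_i(h rho).\<close>
definition is_NE_sub :: "'p set \<Rightarrow> 'a set \<Rightarrow> ('a \<Rightarrow> 'p) \<Rightarrow> ('a \<times> 'a) set \<Rightarrow> ('p \<Rightarrow> 'a set)
     \<Rightarrow> 'a list \<Rightarrow> 'a \<Rightarrow> ('p \<Rightarrow> 'a list \<Rightarrow> 'a) \<Rightarrow> bool" where
  "is_NE_sub Pi V owner E F h v \<sigma> \<longleftrightarrow>
     (\<forall>i\<in>Pi. \<forall>\<tau>. valid_strategy V owner E i \<tau> \<longrightarrow>
        cost F i (prepend h (outcome owner \<sigma> v))
          \<le> cost F i (prepend h (outcome owner (\<sigma>(i := \<tau>)) v)))"

definition is_SPE :: "'p set \<Rightarrow> 'a set \<Rightarrow> ('a \<Rightarrow> 'p) \<Rightarrow> ('a \<times> 'a) set \<Rightarrow> ('p \<Rightarrow> 'a set)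
     \<Rightarrow> 'a \<Rightarrow> ('p \<Rightarrow> 'a list \<Rightarrow> 'a) \<Rightarrow> bool" where
  "is_SPE Pi V owner E F v0 \<sigma> \<longleftrightarrow>
     valid_profile Pi V owner E \<sigma> \<and>
     (\<forall>g. is_hist V E g \<and> hd g = v0 \<longrightarrow>
        is_NE_sub Pi V owner E F (butlast g) (last g) (restrict_profile \<sigma> (butlast g)))"

definition VX :: "'p set \<Rightarrow> 'v set \<Rightarrow> ('v \<times> 'p set) set" where
  "VX Pi V = V \<times> Pow Pi"

definition EdgeX :: "'p set \<Rightarrow> 'v set \<Rightarrow> ('v \<times> 'v) set \<Rightarrow> ('p \<Rightarrow> 'v set)
     \<Rightarrow> (('v \<times> 'p set) \<times> ('v \<times> 'p set)) set" where
  "EdgeX Pi V E F = {((v, I), (v', I')). (v, I) \<in> VX Pi V \<and> (v, v') \<in> E \<and>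
                                      I' = I \<union> {i \<in> Pi. v' \<in> F i}}"

definition ownerX :: "('v \<Rightarrow> 'p) \<Rightarrow> ('v \<times> 'p set) \<Rightarrow> 'p" where
  "ownerX owner u = owner (fst u)"

definition FX :: "'p set \<Rightarrow> 'v set \<Rightarrow> 'p \<Rightarrow> ('v \<times> 'p set) set" where
  "FX Pi V i = {u \<in> VX Pi V. i \<in> snd u}"

definition x0 :: "'p set \<Rightarrow> ('p \<Rightarrow> 'v set) \<Rightarrow> 'v \<Rightarrow> 'v \<times> 'p set" where
  "x0 Pi F v0 = (v0, {i \<in> Pi. v0 \<in> F i})"

definition reach_sets :: "'p set \<Rightarrow> 'v set \<Rightarrow> ('v \<times> 'v) set \<Rightarrow> ('p \<Rightarrow> 'v set) \<Rightarrow> 'v \<Rightarrow> 'p set set" where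
  "reach_sets Pi V E F v0 = {I. \<exists>v. (x0 Pi F v0, (v, I)) \<in> (EdgeX Pi V E F)\<^sup>*}"

definition Iless :: "'p set \<Rightarrow> 'v set \<Rightarrow> ('v \<times> 'v) set \<Rightarrow> ('p \<Rightarrow> 'v set) \<Rightarrow> 'p set \<Rightarrow> 'p set \<Rightarrow> bool" where
  "Iless Pi V E F I I' \<longleftrightarrow> I \<noteq> I' \<and> (\<exists>v v'. ((v, I), (v', I')) \<in> (EdgeX Pi V E F)\<^sup>*)"

definition linear_ext :: "'p set \<Rightarrow> 'v set \<Rightarrow> ('v \<times> 'v) set \<Rightarrow> ('p \<Rightarrow> 'v set) \<Rightarrow> 'v
     \<Rightarrow> (nat \<Rightarrow> 'p set) \<Rightarrow> bool" where
  "linear_ext Pi V E F v0 J \<longleftrightarrow>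
     bij_betw J {1..card (reach_sets Pi V E F v0)} (reach_sets Pi V E F v0) \<and>
     (\<forall>m\<in>{1..card (reach_sets Pi V E F v0)}. \<forall>n\<in>{1..card (reach_sets Pi V E F v0)}.
         Iless Pi V E F (J m) (J n) \<longrightarrow> m < n)"

type_synonym ('v, 'p) labeling = "'v \<times> 'p set \<Rightarrow> enat"

definition Lam :: "'p set \<Rightarrow> 'v set \<Rightarrow> ('v \<Rightarrow> 'p) \<Rightarrow> ('v \<times> 'v) set \<Rightarrow> ('p \<Rightarrow> 'v set)
     \<Rightarrow> ('v, 'p) labeling \<Rightarrow> 'v \<times> 'p set \<Rightarrow> (nat \<Rightarrow> 'v \<times> 'p set) set" where
  "Lam Pi V owner E F lam u =
     {\<rho> \<in> plays_from (EdgeX Pi V E F) u.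
        \<forall>n. cost (FX Pi V) (ownerX owner (\<rho> n)) (suffix_play \<rho> n) \<le> lam (\<rho> n)}"

definition lam0 :: "('v \<Rightarrow> 'p) \<Rightarrow> ('v, 'p) labeling" where
  "lam0 owner u = (if ownerX owner u \<in> snd u then 0 else \<infinity>)"

definition Vge :: "'v set \<Rightarrow> (nat \<Rightarrow> 'p set) \<Rightarrow> nat \<Rightarrow> nat \<Rightarrow> ('v \<times> 'p set) set" where
  "Vge V J N n = {(v, J m) | v m. v \<in> V \<and> n \<le> m \<and> m \<le> N}"

definition lam_update :: "'p set \<Rightarrow> 'v set \<Rightarrow> ('v \<Rightarrow> 'p) \<Rightarrow> ('v \<times> 'v) set \<Rightarrow> ('p \<Rightarrow> 'v set)
     \<Rightarrow> (nat \<Rightarrow> 'p set) \<Rightarrow> nat \<Rightarrow> nat \<Rightarrow> ('v, 'p) labeling \<Rightarrow> ('v, 'p) labeling" where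
  "lam_update Pi V owner E F J N n lam u =
     (if u \<in> Vge V J N n then
        (if ownerX owner u \<in> snd u then 0
         else 1 + (INF u' \<in> {u'. (u, u') \<in> EdgeX Pi V E F}.
                     SUP \<rho> \<in> Lam Pi V owner E F lam u'. cost (FX Pi V) (ownerX owner u) \<rho>))
      else lam u)"

primrec lam_seq :: "'p set \<Rightarrow> 'v set \<Rightarrow> ('v \<Rightarrow> 'p) \<Rightarrow> ('v \<times> 'v) set \<Rightarrow> ('p \<Rightarrow> 'v set)
     \<Rightarrow> (nat \<Rightarrow> 'p set) \<Rightarrow> nat \<Rightarrow> nat \<Rightarrow> ('v, 'p) labeling \<times> nat" where
  "lam_seq Pi V owner E F J N 0 = (lam0 owner, N)"
| "lam_seq Pi V owner E F J N (Suc k) =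
     (let (lam, n) = lam_seq Pi V owner E F J N k;
          lam' = lam_update Pi V owner E F J N n lam
      in (lam', if lam' = lam \<and> 1 < n then n - 1 else n))"

definition lam_star :: "'p set \<Rightarrow> 'v set \<Rightarrow> ('v \<Rightarrow> 'p) \<Rightarrow> ('v \<times> 'v) set \<Rightarrow> ('p \<Rightarrow> 'v set)
     \<Rightarrow> 'v \<Rightarrow> (nat \<Rightarrow> 'p set) \<Rightarrow> ('v, 'p) labeling" where
  "lam_star Pi V owner E F v0 J =
     (let N = card (reach_sets Pi V E F v0);
          kstar = (LEAST k. \<forall>m. fst (lam_seq Pi V owner E F J N (k + m))
                                 = fst (lam_seq Pi V owner E F J N k))
      in fst (lam_seq Pi V owner E F J N kstar))"

end

theory Submission
  imports Defs "HOL-Library.FuncSet"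
begin

definition cons_play :: "'a \<Rightarrow> (nat \<Rightarrow> 'a) \<Rightarrow> nat \<Rightarrow> 'a" where
  "cons_play x \<rho> = (\<lambda>n. case n of 0 \<Rightarrow> x | Suc m \<Rightarrow> \<rho> m)"

lemma cons_play_0[simp]: "cons_play x \<rho> 0 = x" and cons_play_Suc[simp]: "cons_play x \<rho> (Suc n) = \<rho> n"
  by (simp_all add: cons_play_def)

lemma enat_le_via: "(\<And>c. b \<le> enat c \<Longrightarrow> a \<le> enat c) \<Longrightarrow> a \<le> (b::enat)"
  by (cases b; cases a) auto

lemma enat_eq_via: "(\<And>c. a \<le> enat c \<longleftrightarrow> b \<le> enat c) \<Longrightarrow> a = (b::enat)"
  by (meson enat_le_via order_antisym)

lemma cost_le_iff: "cost F i \<rho> \<le> enat c \<longleftrightarrow> (\<exists>p\<le>c. \<rho> p \<in> F i)"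
proof
  assume a: "cost F i \<rho> \<le> enat c"
  then have ex: "\<exists>k. \<rho> k \<in> F i" by (auto simp: cost_def split: if_splits)
  with a have "(LEAST k. \<rho> k \<in> F i) \<le> c" by (simp add: cost_def)
  moreover have "\<rho> (LEAST k. \<rho> k \<in> F i) \<in> F i" using ex by (rule LeastI_ex)
  ultimately show "\<exists>p\<le>c. \<rho> p \<in> F i" by blast
next
  assume "\<exists>p\<le>c. \<rho> p \<in> F i"
  then obtain p where p: "p \<le> c" "\<rho> p \<in> F i" by blast
  then have "(LEAST k. \<rho> k \<in> F i) \<le> p" by (simp add: Least_le)
  thus "cost F i \<rho> \<le> enat c" using p by (auto simp: cost_def)
qed

lemma cost_0_iff: "cost F i \<rho> = 0 \<longleftrightarrow> \<rho> 0 \<in> F i"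
  using cost_le_iff[of F i \<rho> 0] by (simp add: zero_enat_def[symmetric])

lemma cost_cons: "cost F i (cons_play x \<rho>) = (if x \<in> F i then 0 else eSuc (cost F i \<rho>))"
proof (cases "x \<in> F i")
  case True thus ?thesis using cost_0_iff[of F i "cons_play x \<rho>"] by simp
next
  case False
  show ?thesis
  proof (rule enat_eq_via)
    fix c
    show "cost F i (cons_play x \<rho>) \<le> enat c \<longleftrightarrow> (if x \<in> F i then 0 else eSuc (cost F i \<rho>)) \<le> enat c"
    proof (cases c)
      case 0
      have "cost F i (cons_play x \<rho>) \<le> enat 0 \<longleftrightarrow> False" unfolding cost_le_iff using False by simp
      moreover have "eSuc (cost F i \<rho>) \<le> enat 0 \<longleftrightarrow> False" by (simp add: zero_enat_def[symmetric])
      ultimately show ?thesis using False 0 by simp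
    next
      case (Suc d)
      have "cost F i (cons_play x \<rho>) \<le> enat c \<longleftrightarrow> (\<exists>p\<le>d. \<rho> p \<in> F i)"
        unfolding cost_le_iff
      proof
        assume "\<exists>p\<le>c. cons_play x \<rho> p \<in> F i"
        then obtain p where p: "p \<le> c" "cons_play x \<rho> p \<in> F i" by blast
        then show "\<exists>p\<le>d. \<rho> p \<in> F i" using False Suc by (cases p) auto
      next
        assume "\<exists>p\<le>d. \<rho> p \<in> F i"
        then obtain p where p: "p \<le> d" "\<rho> p \<in> F i" by blast
        then show "\<exists>p\<le>c. cons_play x \<rho> p \<in> F i" using Suc by (intro exI[of _ "Suc p"]) simp
      qed
      moreover have "eSuc (cost F i \<rho>) \<le> enat c \<longleftrightarrow> cost F i \<rho> \<le> enat d"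
        using Suc by (simp add: eSuc_enat[symmetric])
      ultimately show ?thesis using False by (simp add: cost_le_iff)
    qed
  qed
qed

lemma cons_suffix: "cons_play (\<rho> 0) (suffix_play \<rho> 1) = \<rho>"
  by (auto simp: cons_play_def suffix_play_def split: nat.splits)

lemma cost_unfold1: "cost F i \<rho> = (if \<rho> 0 \<in> F i then 0 else eSuc (cost F i (suffix_play \<rho> 1)))"
  using cost_cons[of F i "\<rho> 0" "suffix_play \<rho> 1"] by (simp only: cons_suffix)

lemma cost_suffix1: "cost F i \<rho> \<le> eSuc (cost F i (suffix_play \<rho> 1))"
  by (subst cost_unfold1) simp

lemma suffix_cons[simp]: "suffix_play (cons_play x \<rho>) 1 = \<rho>"
  by (simp add: suffix_play_def)

lemma suffix_suffix[simp]: "suffix_play (suffix_play \<rho> n) m = suffix_play \<rho> (n + m)"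
  by (simp add: suffix_play_def add.assoc)

lemma suffix_0[simp]: "suffix_play \<rho> 0 = \<rho>" by (simp add: suffix_play_def)
lemma suffix_app[simp]: "suffix_play \<rho> n m = \<rho> (n + m)" by (simp add: suffix_play_def)

lemma prepend_le_iff:
  "cost F i (prepend b \<rho>) \<le> enat c \<longleftrightarrow>
     (\<exists>p<length b. p \<le> c \<and> b ! p \<in> F i) \<or> (length b \<le> c \<and> cost F i \<rho> \<le> enat (c - length b))"
  unfolding cost_le_iff prepend_def
proof safe
  fix p assume "p \<le> c" "(if p < length b then b ! p else \<rho> (p - length b)) \<in> F i"
    "\<not> (\<exists>p<length b. p \<le> c \<and> b ! p \<in> F i)"
  thus "length b \<le> c" "\<exists>p\<le>c - length b. \<rho> p \<in> F i"
    by (auto split: if_splits intro!: exI[of _ "p - length b"])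
next
  fix p assume "p < length b" "p \<le> c" "b ! p \<in> F i"
  thus "\<exists>p\<le>c. (if p < length b then b ! p else \<rho> (p - length b)) \<in> F i" by auto
next
  fix p assume "length b \<le> c" "p \<le> c - length b" "\<rho> p \<in> F i"
  thus "\<exists>p\<le>c. (if p < length b then b ! p else \<rho> (p - length b)) \<in> F i"
    by (intro exI[of _ "p + length b"]) auto
qed

lemma prepend_mono:
  assumes "cost F i \<rho> \<le> cost F i \<rho>'"
  shows "cost F i (prepend b \<rho>) \<le> cost F i (prepend b \<rho>')"
proof (rule enat_le_via)
  fix c assume "cost F i (prepend b \<rho>') \<le> enat c"
  thus "cost F i (prepend b \<rho>) \<le> enat c" using assms unfolding prepend_le_iff
    by (meson order_trans)
qed

lemma prepend_nohit:
  assumes "\<forall>x\<in>set b. x \<notin> F i"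
  shows "cost F i (prepend b \<rho>) = enat (length b) + cost F i \<rho>"
proof (rule enat_eq_via)
  fix c
  have "(\<exists>p<length b. p \<le> c \<and> b ! p \<in> F i) = False" using assms nth_mem by blast
  moreover have "enat (length b) + cost F i \<rho> \<le> enat c \<longleftrightarrow> (length b \<le> c \<and> cost F i \<rho> \<le> enat (c - length b))"
    by (cases "cost F i \<rho>") auto
  ultimately show "cost F i (prepend b \<rho>) \<le> enat c \<longleftrightarrow> enat (length b) + cost F i \<rho> \<le> enat c"
    unfolding prepend_le_iff by (simp only: simp_thms)
qed

lemma prepend_cons: "prepend b (cons_play x \<rho>) = prepend (b @ [x]) \<rho>"
  apply (rule ext)
  apply (auto simp: prepend_def cons_play_def nth_append split: nat.split)
  apply (rule arg_cong[where f=\<rho>])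
  apply arith
  done

lemma prepend_butlast:
  assumes "g \<noteq> []" "\<rho> 0 = last g"
  shows "prepend (butlast g) \<rho> = prepend g (suffix_play \<rho> 1)"
proof -
  have "prepend (butlast g) \<rho> = prepend (butlast g) (cons_play (\<rho> 0) (suffix_play \<rho> 1))"
    by (simp only: cons_suffix)
  also have "\<dots> = prepend g (suffix_play \<rho> 1)" using assms by (simp add: prepend_cons)
  finally show ?thesis .
qed

lemma map_upt_split: "map \<rho> [0..<n + m] = map \<rho> [0..<n] @ map (suffix_play \<rho> n) [0..<m]"
  by (induction m) auto

lemma map_upt_Suc: "map \<rho> [0..<Suc n] = map \<rho> [0..<n] @ [\<rho> n]" by simp

lemma out_hist_map: "out_hist owner \<sigma> v n = map (outcome owner \<sigma> v) [0..<Suc n]"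
proof (induction n)
  case 0 thus ?case by (simp add: outcome_def)
next
  case (Suc n)
  have "outcome owner \<sigma> v (Suc n) = \<sigma> (owner (last (out_hist owner \<sigma> v n))) (out_hist owner \<sigma> v n)"
    by (simp add: outcome_def)
  then have "out_hist owner \<sigma> v (Suc n) = out_hist owner \<sigma> v n @ [outcome owner \<sigma> v (Suc n)]" by simp
  then show ?case using Suc.IH by simp
qed

lemma outcome_0[simp]: "outcome owner \<sigma> v 0 = v" by (simp add: outcome_def)

lemma outcome_Suc: "outcome owner \<sigma> v (Suc n) =
   \<sigma> (owner (outcome owner \<sigma> v n)) (map (outcome owner \<sigma> v) [0..<Suc n])"
proof -
  have e: "out_hist owner \<sigma> v n = map (outcome owner \<sigma> v) [0..<Suc n]" by (rule out_hist_map)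
  have e2: "last (out_hist owner \<sigma> v n) = outcome owner \<sigma> v n" by (simp add: outcome_def)
  have "outcome owner \<sigma> v (Suc n) = \<sigma> (owner (last (out_hist owner \<sigma> v n))) (out_hist owner \<sigma> v n)"
    by (simp add: outcome_def)
  also have "\<dots> = \<sigma> (owner (outcome owner \<sigma> v n)) (map (outcome owner \<sigma> v) [0..<Suc n])"
    by (subst e2) (simp only: e)
  finally show ?thesis .
qed

lemma map_agree: "\<forall>p\<le>n. f p = g p \<Longrightarrow> map f [0..<Suc n] = map g [0..<Suc n]"
  by (rule map_cong) auto

lemma outcome_agree:
  assumes "\<rho> = outcome owner \<sigma>1 v" "\<rho>2 = outcome owner \<sigma>2 v"
    and "\<forall>m<M. \<sigma>1 (owner (\<rho> m)) (map \<rho> [0..<Suc m]) = \<sigma>2 (owner (\<rho> m)) (map \<rho> [0..<Suc m])"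
  shows "\<forall>p\<le>M. \<rho> p = \<rho>2 p"
  using assms(3)
proof (induction M)
  case 0 show ?case using assms(1,2) by simp
next
  case (Suc M)
  have P: "\<forall>m<M. \<sigma>1 (owner (\<rho> m)) (map \<rho> [0..<Suc m]) = \<sigma>2 (owner (\<rho> m)) (map \<rho> [0..<Suc m])"
    using Suc.prems less_SucI by blast
  have IH: "\<forall>p\<le>M. \<rho> p = \<rho>2 p" by (rule Suc.IH[OF P])
  then have mp: "map \<rho> [0..<Suc M] = map \<rho>2 [0..<Suc M]" by (rule map_agree)
  have eM: "\<rho> M = \<rho>2 M" using IH by simp
  have "\<rho> (Suc M) = \<sigma>1 (owner (\<rho> M)) (map \<rho> [0..<Suc M])"
    unfolding assms(1) by (rule outcome_Suc)
  also have "\<dots> = \<sigma>2 (owner (\<rho> M)) (map \<rho> [0..<Suc M])" using Suc.prems lessI by blast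
  also have "\<dots> = \<sigma>2 (owner (\<rho>2 M)) (map \<rho>2 [0..<Suc M])" by (simp only: eM mp)
  also have "\<dots> = \<rho>2 (Suc M)" unfolding assms(2) by (rule outcome_Suc[symmetric])
  finally have "\<rho> (Suc M) = \<rho>2 (Suc M)" .
  then show ?case using IH by (auto simp: le_Suc_eq)
qed

lemma outcome_unique:
  assumes "\<rho> 0 = v" "\<forall>n. \<rho> (Suc n) = \<sigma> (owner (\<rho> n)) (map \<rho> [0..<Suc n])"
  shows "outcome owner \<sigma> v = \<rho>"
proof -
  have "\<forall>p\<le>n. outcome owner \<sigma> v p = \<rho> p" for n
  proof (induction n)
    case 0 thus ?case using assms by simp
  next
    case (Suc n)
    have mp: "map (outcome owner \<sigma> v) [0..<Suc n] = map \<rho> [0..<Suc n]" using Suc.IH by (rule map_agree)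
    have en: "outcome owner \<sigma> v n = \<rho> n" using Suc.IH by simp
    have "outcome owner \<sigma> v (Suc n) = \<sigma> (owner (outcome owner \<sigma> v n)) (map (outcome owner \<sigma> v) [0..<Suc n])"
      by (rule outcome_Suc)
    also have "\<dots> = \<rho> (Suc n)" by (simp only: en mp assms(2)[rule_format])
    finally have "outcome owner \<sigma> v (Suc n) = \<rho> (Suc n)" .
    then show ?case using Suc.IH by (auto simp: le_Suc_eq)
  qed
  thus ?thesis by auto
qed

lemma restrict_Nil[simp]: "restrict_profile \<sigma> [] = \<sigma>"
  by (simp add: restrict_profile_def)

lemma restrict_app[simp]: "restrict_profile \<sigma> b i h = \<sigma> i (b @ h)"
  by (simp add: restrict_profile_def)

lemma outcome_suffix:
  assumes "\<rho> = outcome owner (restrict_profile \<sigma> b) v"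
  shows "suffix_play \<rho> n = outcome owner (restrict_profile \<sigma> (b @ map \<rho> [0..<n])) (\<rho> n)"
proof (rule sym, rule outcome_unique)
  show "suffix_play \<rho> n 0 = \<rho> n" by simp
  show "\<forall>m. suffix_play \<rho> n (Suc m) = restrict_profile \<sigma> (b @ map \<rho> [0..<n]) (owner (suffix_play \<rho> n m))
          (map (suffix_play \<rho> n) [0..<Suc m])"
  proof
    fix m
    have 1: "\<rho> (Suc (n + m)) = restrict_profile \<sigma> b (owner (\<rho> (n+m))) (map \<rho> [0..<Suc (n + m)])"
      unfolding assms by (rule outcome_Suc)
    have 2: "map \<rho> [0..<Suc (n + m)] = map \<rho> [0..<n] @ map (suffix_play \<rho> n) [0..<Suc m]"
      using map_upt_split[of \<rho> n "Suc m"] by simp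
    have "suffix_play \<rho> n (Suc m) = \<rho> (Suc (n+m))" by simp
    also have "\<dots> = \<sigma> (owner (\<rho> (n+m))) (b @ map \<rho> [0..<Suc (n + m)])" using 1 by (simp only: restrict_app)
    also have "\<dots> = \<sigma> (owner (suffix_play \<rho> n m)) ((b @ map \<rho> [0..<n]) @ map (suffix_play \<rho> n) [0..<Suc m])"
      by (simp only: 2 append_assoc suffix_app)
    finally show "suffix_play \<rho> n (Suc m) = restrict_profile \<sigma> (b @ map \<rho> [0..<n]) (owner (suffix_play \<rho> n m))
          (map (suffix_play \<rho> n) [0..<Suc m])" by (simp only: restrict_app)
  qed
qed


locale xg =
  fixes Pi :: "'p set" and V :: "'v set" and owner :: "'v \<Rightarrow> 'p"
    and E :: "('v \<times> 'v) set" and F :: "'p \<Rightarrow> 'v set"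
  assumes ar: "arena Pi V owner E" and FV: "\<forall>i\<in>Pi. F i \<subseteq> V"
begin

abbreviation "VXs \<equiv> VX Pi V"
abbreviation "EXs \<equiv> EdgeX Pi V E F"
abbreviation "own \<equiv> ownerX owner"
abbreviation "FXs \<equiv> FX Pi V"
abbreviation "cst \<equiv> cost (FX Pi V)"
abbreviation "Lm \<equiv> Lam Pi V owner E F"
abbreviation "hist \<equiv> is_hist (VX Pi V) (EdgeX Pi V E F)"

lemma fin_Pi: "finite Pi" and fin_V: "finite V" using ar by (auto simp: arena_def)

lemma fin_VX: "finite VXs" using fin_Pi fin_V by (simp add: VX_def)

lemma EX_sub: "(u, w) \<in> EXs \<Longrightarrow> u \<in> VXs \<and> w \<in> VXs"
  using ar by (auto simp: EdgeX_def VX_def arena_def)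

lemma EX_snd: "(u, w) \<in> EXs \<Longrightarrow> snd u \<subseteq> snd w"
  by (auto simp: EdgeX_def)

lemma succ_ex: "u \<in> VXs \<Longrightarrow> \<exists>w. (u, w) \<in> EXs"
proof -
  assume u: "u \<in> VXs"
  obtain v I where uv: "u = (v, I)" by fastforce
  with u have "v \<in> V" "I \<subseteq> Pi" by (auto simp: VX_def)
  then obtain v' where "(v, v') \<in> E" using ar by (auto simp: arena_def)
  then have "(u, (v', I \<union> {i \<in> Pi. v' \<in> F i})) \<in> EXs" using u uv by (auto simp: EdgeX_def)
  thus ?thesis by blast
qed

lemma own_Pi: "u \<in> VXs \<Longrightarrow> own u \<in> Pi"
  using ar by (auto simp: arena_def VX_def ownerX_def)

lemma FX_iff: "u \<in> FXs i \<longleftrightarrow> u \<in> VXs \<and> i \<in> snd u"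
  by (simp add: FX_def)

lemma play_VX: "is_play EXs \<rho> \<Longrightarrow> \<rho> n \<in> VXs"
  using EX_sub[of "\<rho> n" "\<rho> (Suc n)"] unfolding is_play_def by simp

lemma play_snd_mono: "is_play EXs \<rho> \<Longrightarrow> m \<le> n \<Longrightarrow> snd (\<rho> m) \<subseteq> snd (\<rho> n)"
proof (induction n)
  case 0 thus ?case by simp
next
  case (Suc n)
  show ?case
  proof (cases "m = Suc n")
    case False
    then have "m \<le> n" using Suc.prems by simp
    then have "snd (\<rho> m) \<subseteq> snd (\<rho> n)" using Suc by blast
    moreover have "snd (\<rho> n) \<subseteq> snd (\<rho> (Suc n))" using Suc.prems(1) EX_snd unfolding is_play_def by blast
    ultimately show ?thesis by blast
  qed simp
qed

lemma hist_single[simp]: "hist [v] \<longleftrightarrow> v \<in> VXs"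
  by (simp add: is_hist_def)

lemma hist_snoc: "h \<noteq> [] \<Longrightarrow> hist (h @ [w]) \<longleftrightarrow> hist h \<and> (last h, w) \<in> EXs"
proof
  assume h: "h \<noteq> []" and hw: "hist (h @ [w])"
  have "(h @ [w]) ! (length h - 1) = last h" using h by (simp add: nth_append last_conv_nth)
  moreover have "(h @ [w]) ! Suc (length h - 1) = w" using h by (simp add: nth_append)
  moreover have "Suc (length h - 1) < length (h @ [w])" using h by simp
  moreover have "((h @ [w]) ! (length h - 1), (h @ [w]) ! Suc (length h - 1)) \<in> EXs"
    using hw \<open>Suc (length h - 1) < length (h @ [w])\<close> unfolding is_hist_def by simp
  ultimately have e: "(last h, w) \<in> EXs" by simp
  have "hist h" unfolding is_hist_def
  proof (intro conjI allI impI)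
    show "h \<noteq> []" by fact
    show "set h \<subseteq> VXs" using hw unfolding is_hist_def by auto
    fix k assume k: "Suc k < length h"
    then have "((h @ [w]) ! k, (h @ [w]) ! Suc k) \<in> EXs" using hw unfolding is_hist_def by simp
    thus "(h ! k, h ! Suc k) \<in> EXs" using k by (simp add: nth_append)
  qed
  with e show "hist h \<and> (last h, w) \<in> EXs" by simp
next
  assume h: "h \<noteq> []" and a: "hist h \<and> (last h, w) \<in> EXs"
  then have "w \<in> VXs" using EX_sub by blast
  moreover have "\<forall>k. Suc k < length (h @ [w]) \<longrightarrow> ((h @ [w]) ! k, (h @ [w]) ! Suc k) \<in> EXs"
  proof (intro allI impI)
    fix k assume k: "Suc k < length (h @ [w])"
    show "((h @ [w]) ! k, (h @ [w]) ! Suc k) \<in> EXs"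
    proof (cases "Suc k < length h")
      case True thus ?thesis using a unfolding is_hist_def by (simp add: nth_append)
    next
      case False
      then have "k = length h - 1" using k by simp
      thus ?thesis using a h False by (simp add: nth_append last_conv_nth)
    qed
  qed
  ultimately show "hist (h @ [w])" using a unfolding is_hist_def by auto
qed

lemma hist_last_VX: "hist h \<Longrightarrow> last h \<in> VXs"
  unfolding is_hist_def by auto

lemma hist_appD: assumes hb: "hist (b @ h)" and h: "h \<noteq> []" shows "hist h"
  unfolding is_hist_def
proof (intro conjI allI impI)
  show "h \<noteq> []" by fact
  show "set h \<subseteq> VXs" using hb unfolding is_hist_def by auto
  fix k assume k: "Suc k < length h"
  then have "Suc (length b + k) < length (b @ h)" by simp
  moreover have "\<forall>k. Suc k < length (b @ h) \<longrightarrow> ((b @ h) ! k, (b @ h) ! Suc k) \<in> EXs"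
    using hb unfolding is_hist_def by (elim conjE)
  ultimately have "((b @ h) ! (length b + k), (b @ h) ! Suc (length b + k)) \<in> EXs" by blast
  moreover have "(b @ h) ! (length b + k) = h ! k" by (simp add: nth_append)
  moreover have "(b @ h) ! Suc (length b + k) = h ! Suc k"
    using nth_append_length_plus[of b h "Suc k"] by simp
  ultimately show "(h ! k, h ! Suc k) \<in> EXs" by simp
qed

lemma hist_snd_mono: "hist g \<Longrightarrow> x \<in> set g \<Longrightarrow> snd x \<subseteq> snd (last g)"
proof (induction g rule: rev_induct)
  case Nil thus ?case by simp
next
  case (snoc w g)
  show ?case
  proof (cases "g = []")
    case True thus ?thesis using snoc by simp
  next
    case False
    then have "hist g" "(last g, w) \<in> EXs" using snoc.prems hist_snoc by auto
    then have sw: "snd (last g) \<subseteq> snd w" using EX_snd by blast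
    from snoc.prems(2) have "x \<in> set g \<or> x = w" by auto
    then show ?thesis
    proof
      assume "x \<in> set g"
      then have "snd x \<subseteq> snd (last g)" using snoc.IH \<open>hist g\<close> by simp
      then show ?thesis using sw by simp
    qed simp
  qed
qed

lemma hist_map_play:
  assumes "is_play EXs \<rho>" "hist (b @ [\<rho> 0])"
  shows "hist (b @ map \<rho> [0..<Suc n])"
proof (induction n)
  case 0 thus ?case using assms by simp
next
  case (Suc n)
  have "last (b @ map \<rho> [0..<Suc n]) = \<rho> n" by simp
  moreover have "(\<rho> n, \<rho> (Suc n)) \<in> EXs" using assms(1) by (simp add: is_play_def)
  ultimately show ?case using Suc hist_snoc[of "b @ map \<rho> [0..<Suc n]" "\<rho> (Suc n)"]
    by (simp del: upt_Suc add: map_upt_Suc)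
qed

lemma Lam_suffix: "\<rho> \<in> Lm lam u \<Longrightarrow> suffix_play \<rho> n \<in> Lm lam (\<rho> n)"
proof -
  assume a: "\<rho> \<in> Lm lam u"
  then have p: "\<forall>m. (\<rho> m, \<rho> (Suc m)) \<in> EXs"
    and c: "\<forall>m. cst (own (\<rho> m)) (suffix_play \<rho> m) \<le> lam (\<rho> m)"
    unfolding Lam_def plays_from_def is_play_def by auto
  have "\<forall>m. (suffix_play \<rho> n m, suffix_play \<rho> n (Suc m)) \<in> EXs" using p by simp
  moreover have "\<forall>m. cst (own (suffix_play \<rho> n m)) (suffix_play (suffix_play \<rho> n) m) \<le> lam (suffix_play \<rho> n m)"
    using c by (simp only: suffix_suffix suffix_app) simp
  ultimately show ?thesis unfolding Lam_def plays_from_def is_play_def by simp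
qed

lemma Lam_mono: assumes "\<forall>x. lam x \<le> lam' x" shows "Lm lam u \<subseteq> Lm lam' u"
  unfolding Lam_def by (auto intro: order_trans[OF _ assms[rule_format]])

lemma outcome_play:
  assumes valid: "\<forall>h. hist (b @ h) \<and> h \<noteq> [] \<and> hd h = v \<longrightarrow> (last h, \<sigma>' (own (last h)) h) \<in> EXs"
    and bv: "hist (b @ [v])"
  shows "outcome own \<sigma>' v \<in> plays_from EXs v"
    and "hist (b @ map (outcome own \<sigma>' v) [0..<Suc n])"
proof -
  let ?\<rho> = "outcome own \<sigma>' v"
  have H: "hist (b @ map ?\<rho> [0..<Suc n]) \<and> (?\<rho> n, ?\<rho> (Suc n)) \<in> EXs" for n
  proof (induction n)
    case 0
    have "(last [v], \<sigma>' (own (last [v])) [v]) \<in> EXs" using valid[rule_format, of "[v]"] bv by simp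
    moreover have "?\<rho> (Suc 0) = \<sigma>' (own v) [v]" using outcome_Suc[of own \<sigma>' v 0] by simp
    ultimately show ?case using bv by simp
  next
    case (Suc n)
    let ?h = "map ?\<rho> [0..<Suc (Suc n)]"
    have h1: "hist (b @ ?h)" using Suc hist_snoc[of "b @ map ?\<rho> [0..<Suc n]" "?\<rho> (Suc n)"]
      by (simp del: upt_Suc add: map_upt_Suc)
    have "hd ?h = v" by (simp del: upt_Suc add: hd_map)
    moreover have "last ?h = ?\<rho> (Suc n)" by simp
    moreover have "?h \<noteq> []" by simp
    ultimately have "(?\<rho> (Suc n), \<sigma>' (own (?\<rho> (Suc n))) ?h) \<in> EXs"
      using valid[rule_format, of ?h] h1 by simp
    moreover have "?\<rho> (Suc (Suc n)) = \<sigma>' (own (?\<rho> (Suc n))) ?h" by (rule outcome_Suc)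
    ultimately show ?case using h1 by simp
  qed
  then show "?\<rho> \<in> plays_from EXs v" by (simp add: plays_from_def is_play_def)
  show "hist (b @ map ?\<rho> [0..<Suc n])" using H by blast
qed

end

lemma map_cons_play: "map (cons_play v \<rho>) [0..<Suc n] = v # map \<rho> [0..<n]"
  by (induction n) auto

lemma enat_INF_attained:
  fixes f :: "'a \<Rightarrow> enat"
  assumes "S \<noteq> {}"
  shows "\<exists>x\<in>S. (INF y\<in>S. f y) = f x"
proof -
  have "f ` S \<noteq> {}" using assms by simp
  then have "Inf (f ` S) = (LEAST z. z \<in> f ` S)" by (simp add: Inf_enat_def)
  moreover have "(LEAST z. z \<in> f ` S) \<in> f ` S" using \<open>f ` S \<noteq> {}\<close> by (meson LeastI ex_in_conv)
  ultimately show ?thesis by auto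
qed

context xg
begin

definition succ_of :: "'v \<times> 'p set \<Rightarrow> 'v \<times> 'p set" where
  "succ_of u = (SOME w. (u, w) \<in> EXs)"

lemma succ_of: "u \<in> VXs \<Longrightarrow> (u, succ_of u) \<in> EXs"
  unfolding succ_of_def using succ_ex by (meson someI_ex)

lemma valid_restrict:
  assumes "valid_profile Pi VXs own EXs \<sigma>"
  shows "\<forall>h. hist (b @ h) \<and> h \<noteq> [] \<and> hd h = v \<longrightarrow> (last h, restrict_profile \<sigma> b (own (last h)) h) \<in> EXs"
proof (intro allI impI)
  fix h assume h: "hist (b @ h) \<and> h \<noteq> [] \<and> hd h = v"
  then have "hist h" using hist_appD by blast
  then have "own (last h) \<in> Pi" using hist_last_VX own_Pi by blast
  then have vs: "valid_strategy VXs own EXs (own (last h)) (\<sigma> (own (last h)))"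
    using assms by (simp add: valid_profile_def)
  have "last (b @ h) = last h" using h by simp
  then show "(last h, restrict_profile \<sigma> b (own (last h)) h) \<in> EXs"
    using vs h unfolding valid_strategy_def by (metis restrict_app)
qed

lemma valid_restrict_upd:
  assumes "valid_profile Pi VXs own EXs \<sigma>" "valid_strategy VXs own EXs j \<tau>"
  shows "\<forall>h. hist (b @ h) \<and> h \<noteq> [] \<and> hd h = v \<longrightarrow> (last h, ((restrict_profile \<sigma> b)(j := \<tau>)) (own (last h)) h) \<in> EXs"
proof (intro allI impI)
  fix h assume h: "hist (b @ h) \<and> h \<noteq> [] \<and> hd h = v"
  show "(last h, ((restrict_profile \<sigma> b)(j := \<tau>)) (own (last h)) h) \<in> EXs"
  proof (cases "own (last h) = j")
    case True
    have "hist h" using h hist_appD by blast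
    then show ?thesis using True assms(2) unfolding valid_strategy_def by simp
  next
    case False
    then show ?thesis using valid_restrict[OF assms(1)] h by simp
  qed
qed

definition dev :: "('p \<Rightarrow> ('v \<times> 'p set) list \<Rightarrow> 'v \<times> 'p set) \<Rightarrow> 'p \<Rightarrow> ('v \<times> 'p set) list
     \<Rightarrow> 'v \<times> 'p set \<Rightarrow> 'v \<times> 'p set \<Rightarrow> ('v \<times> 'p set) list \<Rightarrow> 'v \<times> 'p set" where
  "dev \<sigma> i b v u' = (\<lambda>h. if h = [v] then u' else if hist (b @ h) \<and> h \<noteq> [] \<and> hd h = v then \<sigma> i (b @ h)
                           else succ_of (last h))"

lemma dev_valid:
  assumes "valid_profile Pi VXs own EXs \<sigma>" "(v, u') \<in> EXs" "i \<in> Pi"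
  shows "valid_strategy VXs own EXs i (dev \<sigma> i b v u')"
  unfolding valid_strategy_def
proof (intro allI impI)
  fix h assume h: "hist h \<and> own (last h) = i"
  show "(last h, dev \<sigma> i b v u' h) \<in> EXs"
  proof (cases "h = [v]")
    case True thus ?thesis using assms(2) by (simp add: dev_def)
  next
    case F1: False
    show ?thesis
    proof (cases "hist (b @ h) \<and> h \<noteq> [] \<and> hd h = v")
      case True
      then have "(last h, restrict_profile \<sigma> b (own (last h)) h) \<in> EXs"
        using valid_restrict[OF assms(1)] by blast
      then show ?thesis using F1 True h by (simp add: dev_def)
    next
      case False
      then show ?thesis using F1 h succ_of hist_last_VX by (auto simp: dev_def)
    qed
  qed
qed

lemma dev_outcome:
  assumes valid: "valid_profile Pi VXs own EXs \<sigma>" and g: "hist g" and e: "(last g, u') \<in> EXs"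
    and i: "own (last g) = i"
  shows "outcome own ((restrict_profile \<sigma> (butlast g))(i := dev \<sigma> i (butlast g) (last g) u')) (last g)
         = cons_play (last g) (outcome own (restrict_profile \<sigma> g) u')"
proof (rule outcome_unique)
  let ?b = "butlast g" and ?v = "last g"
  let ?\<rho>1 = "outcome own (restrict_profile \<sigma> g) u'"
  have gne: "g \<noteq> []" using g by (simp add: is_hist_def)
  then have gbv: "g = ?b @ [?v]" by simp
  have gu: "hist (g @ [u'])" using g e gne hist_snoc by blast
  have hists: "hist (g @ map ?\<rho>1 [0..<Suc m])" for m
    using outcome_play(2)[where b=g and v=u' and \<sigma>'="restrict_profile \<sigma> g", OF valid_restrict[OF valid] gu] by blast
  show "cons_play ?v ?\<rho>1 0 = ?v" by simp
  show "\<forall>n. cons_play ?v ?\<rho>1 (Suc n) =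
      ((restrict_profile \<sigma> ?b)(i := dev \<sigma> i ?b ?v u')) (own (cons_play ?v ?\<rho>1 n)) (map (cons_play ?v ?\<rho>1) [0..<Suc n])"
  proof
    fix n
    show "cons_play ?v ?\<rho>1 (Suc n) =
      ((restrict_profile \<sigma> ?b)(i := dev \<sigma> i ?b ?v u')) (own (cons_play ?v ?\<rho>1 n)) (map (cons_play ?v ?\<rho>1) [0..<Suc n])"
    proof (cases n)
      case 0
      then show ?thesis using i by (simp add: dev_def)
    next
      case (Suc m)
      have mc: "map (cons_play ?v ?\<rho>1) [0..<Suc n] = ?v # map ?\<rho>1 [0..<Suc m]"
        using Suc map_cons_play by simp
      have r1: "?\<rho>1 (Suc m) = \<sigma> (own (?\<rho>1 m)) (g @ map ?\<rho>1 [0..<Suc m])"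
        using outcome_Suc[of own "restrict_profile \<sigma> g" u' m] by simp
      have geq: "g @ map ?\<rho>1 [0..<Suc m] = ?b @ (?v # map ?\<rho>1 [0..<Suc m])"
        using gbv by (metis append_Cons append_assoc self_append_conv2)
      have own_n: "own (cons_play ?v ?\<rho>1 n) = own (?\<rho>1 m)" using Suc by simp
      have lhs: "cons_play ?v ?\<rho>1 (Suc n) = ?\<rho>1 (Suc m)" using Suc by simp
      show ?thesis
      proof (cases "own (?\<rho>1 m) = i")
        case True
        have "hist (?b @ (?v # map ?\<rho>1 [0..<Suc m]))" using hists geq by metis
        then have dv: "dev \<sigma> i ?b ?v u' (?v # map ?\<rho>1 [0..<Suc m]) = \<sigma> i (?b @ (?v # map ?\<rho>1 [0..<Suc m]))"
          by (simp del: upt_Suc add: dev_def)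
        have "cons_play ?v ?\<rho>1 (Suc n) = \<sigma> i (?b @ (?v # map ?\<rho>1 [0..<Suc m]))"
          by (simp only: lhs r1 True geq)
        also have "\<dots> = ((restrict_profile \<sigma> ?b)(i := dev \<sigma> i ?b ?v u')) (own (cons_play ?v ?\<rho>1 n)) (map (cons_play ?v ?\<rho>1) [0..<Suc n])"
          by (simp only: own_n mc True fun_upd_same dv)
        finally show ?thesis .
      next
        case False
        have "cons_play ?v ?\<rho>1 (Suc n) = \<sigma> (own (?\<rho>1 m)) (?b @ (?v # map ?\<rho>1 [0..<Suc m]))"
          by (simp only: lhs r1 geq)
        also have "\<dots> = ((restrict_profile \<sigma> ?b)(i := dev \<sigma> i ?b ?v u')) (own (cons_play ?v ?\<rho>1 n)) (map (cons_play ?v ?\<rho>1) [0..<Suc n])"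
          using False by (simp only: own_n mc fun_upd_other restrict_app not_False_eq_True simp_thms)
        finally show ?thesis .
      qed
    qed
  qed
qed

lemma lam_seq_Suc_fst:
  "fst (lam_seq Pi V owner E F J N (Suc k)) =
     lam_update Pi V owner E F J N (snd (lam_seq Pi V owner E F J N k)) (fst (lam_seq Pi V owner E F J N k))"
  by (simp add: split_beta Let_def)

lemma lam_seq_Suc_snd:
  "snd (lam_seq Pi V owner E F J N (Suc k)) =
     (if lam_update Pi V owner E F J N (snd (lam_seq Pi V owner E F J N k)) (fst (lam_seq Pi V owner E F J N k))
         = fst (lam_seq Pi V owner E F J N k) \<and> 1 < snd (lam_seq Pi V owner E F J N k)
      then snd (lam_seq Pi V owner E F J N k) - 1 else snd (lam_seq Pi V owner E F J N k))"
  by (simp add: split_beta Let_def)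

lemma lam_seq_0: "lam_seq Pi V owner E F J N 0 = (lam0 owner, N)" by simp

lemma Lam_from_root:
  assumes valid: "valid_profile Pi VXs own EXs \<sigma>"
    and Q: "\<forall>g. hist g \<and> hd g = u0 \<longrightarrow>
      cst (own (last g)) (outcome own (restrict_profile \<sigma> (butlast g)) (last g)) \<le> lam (last g)"
    and g: "hist g" "hd g = u0"
  shows "outcome own (restrict_profile \<sigma> (butlast g)) (last g) \<in> Lm lam (last g)"
proof -
  let ?b = "butlast g" and ?v = "last g"
  let ?\<rho> = "outcome own (restrict_profile \<sigma> ?b) ?v"
  have gne: "g \<noteq> []" using g by (simp add: is_hist_def)
  then have gbv: "?b @ [?v] = g" by simp
  have pl: "?\<rho> \<in> plays_from EXs ?v" using outcome_play(1)[where b="?b" and v="?v" and \<sigma>'="restrict_profile \<sigma> ?b", OF valid_restrict[OF valid]] g gbv by simp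
  have "cst (own (?\<rho> n)) (suffix_play ?\<rho> n) \<le> lam (?\<rho> n)" for n
  proof -
    let ?g' = "?b @ map ?\<rho> [0..<Suc n]"
    have h': "hist ?g'" using outcome_play(2)[where b="?b" and v="?v" and \<sigma>'="restrict_profile \<sigma> ?b", OF valid_restrict[OF valid]] g gbv by simp
    have hd': "hd ?g' = u0"
    proof (cases "?b = []")
      case True
      then have "g = [?v]" using gbv by simp
      have "hd ?g' = hd (map ?\<rho> [0..<Suc n])" using True by simp
      also have "\<dots> = ?\<rho> 0" by (simp add: hd_map hd_upt del: upt_Suc)
      also have "\<dots> = hd g" using \<open>g = [?v]\<close> by (metis list.sel(1) outcome_0)
      finally show ?thesis using g by simp
    next
      case False
      then have "hd ?g' = hd ?b" by simp
      also have "\<dots> = hd g" using False gbv by (metis hd_append2)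
      finally show ?thesis using g by simp
    qed
    have bl: "butlast ?g' = ?b @ map ?\<rho> [0..<n]" by (simp del: upt_Suc add: map_upt_Suc butlast_append)
    have ll: "last ?g' = ?\<rho> n" by simp
    have "suffix_play ?\<rho> n = outcome own (restrict_profile \<sigma> (?b @ map ?\<rho> [0..<n])) (?\<rho> n)"
      by (rule outcome_suffix) simp
    then show ?thesis using Q[rule_format, of ?g'] h' hd' bl ll by simp
  qed
  then show ?thesis using pl by (simp add: Lam_def)
qed

lemma SPE_consistent:
  assumes spe: "is_SPE Pi VXs own EXs FXs u0 \<sigma>"
  shows "\<forall>g. hist g \<and> hd g = u0 \<longrightarrow>
     outcome own (restrict_profile \<sigma> (butlast g)) (last g) \<in> Lm (fst (lam_seq Pi V owner E F J N k)) (last g)"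
proof (induction k)
  have valid: "valid_profile Pi VXs own EXs \<sigma>" using spe by (simp add: is_SPE_def)
  case 0
  show ?case
  proof (intro allI impI)
    fix g assume g: "hist g \<and> hd g = u0"
    show "outcome own (restrict_profile \<sigma> (butlast g)) (last g) \<in> Lm (fst (lam_seq Pi V owner E F J N 0)) (last g)"
      unfolding lam_seq_0 fst_conv
    proof (rule Lam_from_root[OF valid _ ]; (intro allI impI)?)
      fix g' assume g': "hist g' \<and> hd g' = u0"
      let ?\<rho> = "outcome own (restrict_profile \<sigma> (butlast g')) (last g')"
      show "cst (own (last g')) ?\<rho> \<le> lam0 owner (last g')"
      proof (cases "own (last g') \<in> snd (last g')")
        case True
        then have "?\<rho> 0 \<in> FXs (own (last g'))" using g' hist_last_VX by (simp add: FX_iff)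
        then have "cst (own (last g')) ?\<rho> = 0" by (simp add: cost_0_iff)
        then show ?thesis by simp
      next
        case False thus ?thesis by (simp add: lam0_def)
      qed
    qed (use g in auto)
  qed
next
  have valid: "valid_profile Pi VXs own EXs \<sigma>" using spe by (simp add: is_SPE_def)
  case (Suc k)
  let ?lk = "fst (lam_seq Pi V owner E F J N k)"
  let ?nk = "snd (lam_seq Pi V owner E F J N k)"
  show ?case
  proof (intro allI impI)
    fix g assume g: "hist g \<and> hd g = u0"
    show "outcome own (restrict_profile \<sigma> (butlast g)) (last g) \<in> Lm (fst (lam_seq Pi V owner E F J N (Suc k))) (last g)"
      unfolding lam_seq_Suc_fst
    proof (rule Lam_from_root[OF valid _ ]; (intro allI impI)?)
      fix g' assume g': "hist g' \<and> hd g' = u0"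
      let ?b = "butlast g'" and ?u = "last g'"
      let ?\<rho> = "outcome own (restrict_profile \<sigma> ?b) ?u"
      let ?i = "own ?u"
      have gne: "g' \<noteq> []" using g' by (simp add: is_hist_def)
      have uVX: "?u \<in> VXs" using g' hist_last_VX by blast
      have IH: "outcome own (restrict_profile \<sigma> (butlast h)) (last h) \<in> Lm ?lk (last h)" if "hist h" "hd h = u0" for h
        using Suc.IH that by blast
      show "cst ?i ?\<rho> \<le> lam_update Pi V owner E F J N ?nk ?lk ?u"
      proof (cases "?u \<in> Vge V J N ?nk")
        case False
        then have "lam_update Pi V owner E F J N ?nk ?lk ?u = ?lk ?u" by (simp add: lam_update_def)
        moreover have "?\<rho> \<in> Lm ?lk ?u" using IH g' by blast
        then have "\<forall>n. cst (own (?\<rho> n)) (suffix_play ?\<rho> n) \<le> ?lk (?\<rho> n)" by (simp add: Lam_def)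
        then have "cst (own (?\<rho> 0)) (suffix_play ?\<rho> 0) \<le> ?lk (?\<rho> 0)" by blast
        ultimately show ?thesis by simp
      next
        case inV: True
        show ?thesis
        proof (cases "?i \<in> snd ?u")
          case True
          then have "?\<rho> 0 \<in> FXs ?i" using uVX by (simp add: FX_iff)
          then have "cst ?i ?\<rho> = 0" by (simp add: cost_0_iff)
          then show ?thesis by simp
        next
          case notin: False
          let ?S = "{u'. (?u, u') \<in> EXs}"
          let ?f = "\<lambda>u'. SUP \<rho>\<in>Lm ?lk u'. cst ?i \<rho>"
          have upd: "lam_update Pi V owner E F J N ?nk ?lk ?u = 1 + (INF u'\<in>?S. ?f u')"
            using inV notin by (simp add: lam_update_def)
          have S: "?S \<noteq> {}" using succ_ex[OF uVX] by blast
          obtain u' where u': "u' \<in> ?S" "(INF u'\<in>?S. ?f u') = ?f u'" using enat_INF_attained[OF S] by blast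
          have e: "(?u, u') \<in> EXs" using u' by simp
          have iPi: "?i \<in> Pi" using own_Pi uVX by blast
          let ?\<tau> = "dev \<sigma> ?i ?b ?u u'"
          have tv: "valid_strategy VXs own EXs ?i ?\<tau>" using dev_valid[OF valid e iPi] .
          have NE: "is_NE_sub Pi VXs own EXs FXs ?b ?u (restrict_profile \<sigma> ?b)"
            using spe g' by (simp add: is_SPE_def)
          then have ne: "cst ?i (prepend ?b ?\<rho>) \<le> cst ?i (prepend ?b (outcome own ((restrict_profile \<sigma> ?b)(?i := ?\<tau>)) ?u))"
            using iPi tv unfolding is_NE_sub_def by blast
          have dv: "outcome own ((restrict_profile \<sigma> ?b)(?i := ?\<tau>)) ?u = cons_play ?u (outcome own (restrict_profile \<sigma> g') u')"
            using dev_outcome[OF valid _ e] g' by blast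
          let ?\<rho>1 = "outcome own (restrict_profile \<sigma> g') u'"
          have nohit: "\<forall>x\<in>set ?b. x \<notin> FXs ?i"
          proof
            fix x assume "x \<in> set ?b"
            then have "x \<in> set g'" by (meson in_set_butlastD)
            then have "snd x \<subseteq> snd ?u" using hist_snd_mono g' by blast
            then show "x \<notin> FXs ?i" using notin by (auto simp: FX_iff)
          qed
          have "enat (length ?b) + cst ?i ?\<rho> \<le> enat (length ?b) + cst ?i (cons_play ?u ?\<rho>1)"
            using ne dv prepend_nohit[where F=FXs and i="?i", OF nohit] by simp
          then have c1: "cst ?i ?\<rho> \<le> cst ?i (cons_play ?u ?\<rho>1)"
            by (cases "cst ?i ?\<rho>"; cases "cst ?i (cons_play ?u ?\<rho>1)") auto
          have "?u \<notin> FXs ?i" using notin by (simp add: FX_iff)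
          then have c2: "cst ?i (cons_play ?u ?\<rho>1) = eSuc (cst ?i ?\<rho>1)" by (simp add: cost_cons)
          have gu: "hist (g' @ [u'])" using g' e gne hist_snoc by blast
          have "hd (g' @ [u']) = u0" using g' gne by simp
          then have "?\<rho>1 \<in> Lm ?lk u'" using IH[OF gu] by simp
          then have "cst ?i ?\<rho>1 \<le> ?f u'" by (rule SUP_upper)
          then have "eSuc (cst ?i ?\<rho>1) \<le> 1 + ?f u'" by (simp add: plus_1_eSuc)
          then show ?thesis using c1 c2 upd u' by simp
        qed
      qed
    qed (use g in auto)
  qed
qed

end

lemma dec_stab:
  fixes f :: "nat \<Rightarrow> 'a::wellorder"
  assumes "\<And>k. f (Suc k) \<le> f k"
  shows "\<exists>K. \<forall>k\<ge>K. f k = f K"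
proof -
  let ?m = "LEAST x. x \<in> range f"
  have "?m \<in> range f" by (rule LeastI_ex) blast
  then obtain K where K: "f K = ?m" by auto
  have "f k = f K" if "K \<le> k" for k
  proof (rule antisym)
    show "f k \<le> f K" using lift_Suc_antimono_le[of f, OF assms that] .
    show "f K \<le> f k" unfolding K by (rule Least_le) simp
  qed
  thus ?thesis by blast
qed

context xg
begin

abbreviation "ls J N k \<equiv> lam_seq Pi V owner E F J N k"

lemma Vge_mono: "n' \<le> n \<Longrightarrow> Vge V J N n \<subseteq> Vge V J N n'"
  unfolding Vge_def using le_trans by blast

lemma Vge_VX: assumes "\<forall>m\<in>{1..N}. J m \<subseteq> Pi" "1 \<le> n" shows "Vge V J N n \<subseteq> VXs"
  using assms unfolding Vge_def VX_def by force

lemma nk_bounds: assumes "1 \<le> N" shows "1 \<le> snd (ls J N k) \<and> snd (ls J N k) \<le> N"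
proof (induction k)
  case 0 thus ?case using assms by simp
next
  case (Suc k) thus ?case by (simp only: lam_seq_Suc_snd) auto
qed

lemma nk_dec: "snd (ls J N (Suc k)) \<le> snd (ls J N k)"
  by (simp only: lam_seq_Suc_snd) auto

lemma S2: "u \<notin> Vge V J N (snd (ls J N k)) \<Longrightarrow> fst (ls J N k) u = lam0 owner u"
proof (induction k)
  case 0 thus ?case by simp
next
  case (Suc k)
  have "u \<notin> Vge V J N (snd (ls J N k))" using Suc.prems Vge_mono[OF nk_dec[of J N k]] by blast
  then show ?case using Suc.IH by (simp only: lam_seq_Suc_fst) (simp add: lam_update_def)
qed

lemma upd_le_lam0: "u \<in> Vge V J N n \<Longrightarrow> lam_update Pi V owner E F J N n lam u \<le> lam0 owner u"
  by (simp add: lam_update_def lam0_def)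

lemma upd_indep: "u \<in> Vge V J N n \<Longrightarrow> u \<in> Vge V J N n' \<Longrightarrow>
   lam_update Pi V owner E F J N n lam u = lam_update Pi V owner E F J N n' lam u"
  by (simp add: lam_update_def)

lemma upd_anti:
  assumes "\<forall>x. lam x \<le> lam' x"
  shows "lam_update Pi V owner E F J N n lam u \<le> lam_update Pi V owner E F J N n lam' u"
proof -
  have "(SUP \<rho>\<in>Lm lam u'. cst i \<rho>) \<le> (SUP \<rho>\<in>Lm lam' u'. cst i \<rho>)" for u' i
    by (rule SUP_subset_mono[OF Lam_mono[OF assms]]) simp
  then have "(INF u'\<in>S. SUP \<rho>\<in>Lm lam u'. cst i \<rho>) \<le> (INF u'\<in>S. SUP \<rho>\<in>Lm lam' u'. cst i \<rho>)" for S i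
    by (rule INF_mono') 
  then show ?thesis using assms[rule_format, of u] by (simp add: lam_update_def add_left_mono)
qed

lemma S3: "fst (ls J N (Suc k)) u \<le> fst (ls J N k) u"
proof (induction k arbitrary: u)
  case 0
  show ?case
  proof (cases "u \<in> Vge V J N (snd (ls J N 0))")
    case True
    then show ?thesis using upd_le_lam0[OF True] by (simp only: lam_seq_Suc_fst) simp
  next
    case False
    then show ?thesis by (simp only: lam_seq_Suc_fst) (simp add: lam_update_def)
  qed
next
  case (Suc k)
  show ?case
  proof (cases "u \<in> Vge V J N (snd (ls J N (Suc k)))")
    case False
    then show ?thesis by (simp only: lam_seq_Suc_fst[of J N "Suc k"]) (simp add: lam_update_def)
  next
    case T1: True
    have e1: "fst (ls J N (Suc (Suc k))) u = lam_update Pi V owner E F J N (snd (ls J N (Suc k))) (fst (ls J N (Suc k))) u"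
      by (simp only: lam_seq_Suc_fst)
    show ?thesis
    proof (cases "u \<in> Vge V J N (snd (ls J N k))")
      case True
      have e2: "fst (ls J N (Suc k)) u = lam_update Pi V owner E F J N (snd (ls J N k)) (fst (ls J N k)) u"
        by (simp only: lam_seq_Suc_fst)
      have "lam_update Pi V owner E F J N (snd (ls J N (Suc k))) (fst (ls J N (Suc k))) u
          = lam_update Pi V owner E F J N (snd (ls J N k)) (fst (ls J N (Suc k))) u"
        using upd_indep[OF T1 True] .
      also have "\<dots> \<le> lam_update Pi V owner E F J N (snd (ls J N k)) (fst (ls J N k)) u"
        by (rule upd_anti) (use Suc.IH in blast)
      finally show ?thesis using e1 e2 by simp
    next
      case False
      have "u \<notin> Vge V J N (snd (ls J N k))" using False .
      then have "fst (ls J N (Suc k)) u = fst (ls J N k) u" 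
        by (simp only: lam_seq_Suc_fst) (simp add: lam_update_def)
      also have "\<dots> = lam0 owner u" using S2[OF False] .
      finally show ?thesis using e1 upd_le_lam0[OF T1] by simp
    qed
  qed
qed

lemma S4:
  assumes J: "\<forall>m\<in>{1..N}. J m \<subseteq> Pi" and N: "1 \<le> N"
  shows "\<exists>K. \<forall>m. fst (ls J N (K + m)) = fst (ls J N K)"
proof -
  have st: "\<exists>K. \<forall>k\<ge>K. fst (ls J N k) u = fst (ls J N K) u" for u
    by (rule dec_stab) (rule S3)
  then have "\<forall>u\<in>VXs. \<exists>K. \<forall>k\<ge>K. fst (ls J N k) u = fst (ls J N K) u" by blast
  then obtain Ku where Ku: "\<forall>u\<in>VXs. \<forall>k\<ge>Ku u. fst (ls J N k) u = fst (ls J N (Ku u)) u"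
    using bchoice[of VXs "\<lambda>u K. \<forall>k\<ge>K. fst (ls J N k) u = fst (ls J N K) u"] by blast
  let ?K = "Max (insert 0 (Ku ` VXs))"
  have fin: "finite (insert 0 (Ku ` VXs))" using fin_VX by simp
  have "fst (ls J N (?K + m)) u = fst (ls J N ?K) u" for m u
  proof (cases "u \<in> VXs")
    case True
    then have le: "Ku u \<le> ?K" using fin by (simp add: Max_ge)
    have k1: "fst (ls J N (?K + m)) u = fst (ls J N (Ku u)) u"
      by (rule Ku[rule_format, OF True]) (use le in simp)
    have k2: "fst (ls J N ?K) u = fst (ls J N (Ku u)) u"
      by (rule Ku[rule_format, OF True]) (use le in simp)
    have "fst (ls J N (?K + m)) u = fst (ls J N (Ku u)) u" by (rule k1)
    also have "\<dots> = fst (ls J N ?K) u" by (rule k2[symmetric])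
    finally show ?thesis .
  next
    case False
    have "u \<notin> Vge V J N (snd (ls J N k))" for k
      using False Vge_VX[OF J] nk_bounds[OF N, of J k] by blast
    then show ?thesis using S2 by simp
  qed
  then show ?thesis by blast
qed

lemma S5:
  assumes J: "\<forall>m\<in>{1..N}. J m \<subseteq> Pi" and N: "1 \<le> N"
  defines "ks \<equiv> LEAST k. \<forall>m. fst (ls J N (k + m)) = fst (ls J N k)"
  shows "lam_update Pi V owner E F J N 1 (fst (ls J N ks)) = fst (ls J N ks)"
proof -
  have const: "\<forall>m. fst (ls J N (ks + m)) = fst (ls J N ks)"
    unfolding ks_def by (rule LeastI_ex) (rule S4[OF J N])
  have nk: "snd (ls J N (ks + m)) = max 1 (snd (ls J N ks) - m)" for m
  proof (induction m)
    case 0 thus ?case using nk_bounds[OF N, of J ks] by simp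
  next
    case (Suc m)
    have "lam_update Pi V owner E F J N (snd (ls J N (ks + m))) (fst (ls J N (ks + m))) = fst (ls J N (ks + m))"
      using const[rule_format, of "Suc m"] const[rule_format, of m] lam_seq_Suc_fst[of J N "ks + m"] by simp
    then have "snd (ls J N (Suc (ks + m))) = (if 1 < snd (ls J N (ks + m)) then snd (ls J N (ks + m)) - 1 else snd (ls J N (ks + m)))"
      by (simp only: lam_seq_Suc_snd) simp
    then show ?case using Suc.IH by simp
  qed
  have n1: "snd (ls J N (ks + N)) = 1" using nk[of N] nk_bounds[OF N, of J ks] by simp
  have "fst (ls J N (Suc (ks + N))) = lam_update Pi V owner E F J N 1 (fst (ls J N (ks + N)))"
    using lam_seq_Suc_fst[of J N "ks + N"] n1 by simp
  then show ?thesis using const[rule_format, of "Suc N"] const[rule_format, of N] by simp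
qed

end

lemma diag_limit:
  fixes s :: "nat \<Rightarrow> 'k \<Rightarrow> 'b" and K :: "nat \<Rightarrow> 'k set"
  assumes finK: "\<And>L. finite (K L)" and monoK: "\<And>L. K L \<subseteq> K (Suc L)"
    and finB: "finite B" and inB: "\<And>d L x. x \<in> K L \<Longrightarrow> s d x \<in> B"
  shows "\<exists>t. \<forall>L D. \<exists>d\<ge>D. \<forall>x\<in>K L. s d x = t x"
proof -
  define r where "r L d = restrict (s d) (K L)" for L d
  have finr: "finite (r L ` A)" for L A
  proof (rule finite_subset)
    show "r L ` A \<subseteq> PiE (K L) (\<lambda>_. B)" using inB by (auto simp: r_def)
    show "finite (PiE (K L) (\<lambda>_. B))" using finK finB by (simp add: finite_PiE)
  qed
  define sub where "sub L A = (SOME A'. A' \<subseteq> A \<and> infinite A' \<and> (\<exists>f. \<forall>d\<in>A'. r L d = f))" for L and A :: "nat set"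
  have sub: "sub L A \<subseteq> A \<and> infinite (sub L A) \<and> (\<exists>f. \<forall>d\<in>sub L A. r L d = f)" if inf: "infinite A" for L A
  proof -
    obtain y where "y \<in> r L ` A" "infinite (r L -` {y} \<inter> A)" using inf_img_fin_dom'[OF finr inf] by blast
    then have "\<exists>A'. A' \<subseteq> A \<and> infinite A' \<and> (\<exists>f. \<forall>d\<in>A'. r L d = f)"
      by (intro exI[of _ "r L -` {y} \<inter> A"]) auto
    then show ?thesis unfolding sub_def by (rule someI_ex)
  qed
  define S where "S = rec_nat (sub 0 UNIV) (\<lambda>L A. sub (Suc L) A)"
  have S0: "S 0 = sub 0 UNIV" and SS: "S (Suc L) = sub (Suc L) (S L)" for L by (simp_all add: S_def)
  have Sprop: "infinite (S L) \<and> (\<exists>f. \<forall>d\<in>S L. r L d = f)" for L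
  proof (induction L)
    case 0 thus ?case using sub[of UNIV 0] S0 by simp
  next
    case (Suc L) thus ?case using sub[of "S L" "Suc L"] SS by simp
  qed
  have Sdec: "S (Suc L) \<subseteq> S L" for L using sub[of "S L" "Suc L"] Sprop SS by simp
  have Santi: "L' \<le> L \<Longrightarrow> S L \<subseteq> S L'" for L L'
    using lift_Suc_antimono_le[of S, OF Sdec] by blast
  have Kmono: "L' \<le> L \<Longrightarrow> K L' \<subseteq> K L" for L L'
    using lift_Suc_mono_le[of K, OF monoK] by blast
  define pick where "pick x = (SOME d. d \<in> S (LEAST L. x \<in> K L))" for x
  define t where "t x = s (pick x) x" for x
  have "\<forall>L D. \<exists>d\<ge>D. \<forall>x\<in>K L. s d x = t x"
  proof (intro allI)
    fix L D
    obtain d where d: "d \<in> S L" "d \<ge> D" using Sprop[of L] by (meson infinite_nat_iff_unbounded_le)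
    have "s d x = t x" if x: "x \<in> K L" for x
    proof -
      let ?Lx = "LEAST L. x \<in> K L"
      have xL: "x \<in> K ?Lx" using x by (rule LeastI)
      have le: "?Lx \<le> L" using x by (rule Least_le)
      have pk: "pick x \<in> S ?Lx" unfolding pick_def
        using Sprop[of ?Lx] by (metis finite.emptyI some_in_eq)
      obtain f where f: "\<forall>d\<in>S ?Lx. r ?Lx d = f" using Sprop by blast
      have "d \<in> S ?Lx" using Santi[OF le] d by blast
      then have "r ?Lx d = r ?Lx (pick x)" using f pk by simp
      then have "r ?Lx d x = r ?Lx (pick x) x" by simp
      then show ?thesis using xL by (simp add: r_def t_def)
    qed
    then show "\<exists>d\<ge>D. \<forall>x\<in>K L. s d x = t x" using d by blast
  qed
  then show ?thesis by blast
qed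

lemma ex_min_enat:
  fixes f :: "'a \<Rightarrow> enat"
  assumes "S \<noteq> {}"
  shows "\<exists>w\<in>S. \<forall>w'\<in>S. f w \<le> f w'"
proof -
  obtain w where w: "w \<in> S" "(INF y\<in>S. f y) = f w" using enat_INF_attained[OF assms] by blast
  then have "\<forall>w'\<in>S. f w \<le> f w'" by (metis INF_lower)
  with w show ?thesis by blast
qed

lemma map_upt_Suc_Suc: "map \<rho> [0..<Suc (Suc m)] = \<rho> 0 # map (suffix_play \<rho> 1) [0..<Suc m]"
  using map_upt_split[of \<rho> 1 "Suc m"] by simp

context xg
begin

definition some_play :: "'v \<times> 'p set \<Rightarrow> nat \<Rightarrow> 'v \<times> 'p set" where
  "some_play u = (\<lambda>n. (succ_of ^^ n) u)"

lemma some_play: "u \<in> VXs \<Longrightarrow> some_play u \<in> plays_from EXs u"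
proof -
  assume u: "u \<in> VXs"
  have "(succ_of ^^ n) u \<in> VXs" for n
  proof (induction n)
    case 0 thus ?case using u by simp
  next
    case (Suc n) thus ?case using EX_sub[OF succ_of[OF Suc.IH]] by simp
  qed
  then show ?thesis using succ_of by (simp add: plays_from_def is_play_def some_play_def)
qed

lemma some_play_0[simp]: "some_play u 0 = u" by (simp add: some_play_def)

definition tcost :: "nat \<Rightarrow> 'p \<Rightarrow> (nat \<Rightarrow> 'v \<times> 'p set) \<Rightarrow> enat" where
  "tcost D i \<rho> = (if cst i \<rho> \<le> enat D then cst i \<rho> else \<infinity>)"

lemma tcost_agree:
  assumes "\<forall>p\<le>D. x p = y p"
  shows "tcost D i x = tcost D i y"
proof -
  have ex: "(\<exists>p\<le>c. x p \<in> FXs i) \<longleftrightarrow> (\<exists>p\<le>c. y p \<in> FXs i)" if "c \<le> D" for c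
    using assms that by (metis order_trans)
  have dd: "cst i x \<le> enat D \<longleftrightarrow> cst i y \<le> enat D" using ex[of D] by (simp add: cost_le_iff)
  show ?thesis
  proof (cases "cst i x \<le> enat D")
    case True
    then have yD: "cst i y \<le> enat D" using dd by simp
    have "cst i x = cst i y"
    proof (rule enat_eq_via)
      fix c
      show "cst i x \<le> enat c \<longleftrightarrow> cst i y \<le> enat c"
      proof (cases "c \<le> D")
        case True thus ?thesis using ex[OF True] by (simp add: cost_le_iff)
      next
        case False
        then have "enat D \<le> enat c" by simp
        then show ?thesis using True yD by (meson order_trans)
      qed
    qed
    then show ?thesis using True yD by (simp add: tcost_def)
  next
    case False thus ?thesis using dd by (simp add: tcost_def)
  qed
qed

lemma tcost_ge: "cst i \<rho> \<le> tcost D i \<rho>" by (simp add: tcost_def)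

lemma tcost_le: "cst i \<rho> \<le> enat c \<Longrightarrow> c \<le> D \<Longrightarrow> tcost D i \<rho> \<le> enat c"
  by (auto simp: tcost_def intro: order_trans)

primrec BI :: "nat \<Rightarrow> nat \<Rightarrow> ('v \<times> 'p set) list \<Rightarrow> nat \<Rightarrow> 'v \<times> 'p set" where
  "BI D 0 h = some_play (last h)"
| "BI D (Suc n) h = cons_play (last h) (BI D n (h @ [SOME w. (last h, w) \<in> EXs \<and>
      (\<forall>w'. (last h, w') \<in> EXs \<longrightarrow> tcost D (own (last h)) (prepend h (BI D n (h @ [w])))
                                   \<le> tcost D (own (last h)) (prepend h (BI D n (h @ [w'])))) ]))"

definition chs :: "nat \<Rightarrow> nat \<Rightarrow> ('v \<times> 'p set) list \<Rightarrow> 'v \<times> 'p set" where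
  "chs D n h = (SOME w. (last h, w) \<in> EXs \<and>
      (\<forall>w'. (last h, w') \<in> EXs \<longrightarrow> tcost D (own (last h)) (prepend h (BI D n (h @ [w])))
                                   \<le> tcost D (own (last h)) (prepend h (BI D n (h @ [w'])))))"

lemma BI_Suc: "BI D (Suc n) h = cons_play (last h) (BI D n (h @ [chs D n h]))"
  by (simp add: chs_def)

declare BI.simps(2)[simp del]

lemma chs_spec:
  assumes "last h \<in> VXs"
  shows "(last h, chs D n h) \<in> EXs \<and>
      (\<forall>w'. (last h, w') \<in> EXs \<longrightarrow> tcost D (own (last h)) (prepend h (BI D n (h @ [chs D n h])))
                                   \<le> tcost D (own (last h)) (prepend h (BI D n (h @ [w']))))"
proof -
  have "{w. (last h, w) \<in> EXs} \<noteq> {}" using succ_ex[OF assms] by blast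
  then obtain w where "w \<in> {w. (last h, w) \<in> EXs}"
    "\<forall>w'\<in>{w. (last h, w) \<in> EXs}. tcost D (own (last h)) (prepend h (BI D n (h @ [w])))
         \<le> tcost D (own (last h)) (prepend h (BI D n (h @ [w'])))"
    using ex_min_enat[of "{w. (last h, w) \<in> EXs}" "\<lambda>w. tcost D (own (last h)) (prepend h (BI D n (h @ [w])))"]
    by blast
  then have "\<exists>w. (last h, w) \<in> EXs \<and>
      (\<forall>w'. (last h, w') \<in> EXs \<longrightarrow> tcost D (own (last h)) (prepend h (BI D n (h @ [w])))
                                   \<le> tcost D (own (last h)) (prepend h (BI D n (h @ [w']))))" by blast
  then show ?thesis unfolding chs_def by (rule someI_ex)
qed

definition \<sigma>D :: "nat \<Rightarrow> 'p \<Rightarrow> ('v \<times> 'p set) list \<Rightarrow> 'v \<times> 'p set" where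
  "\<sigma>D D i h = chs D (D - length h) h"

lemma \<sigma>D_succ: "last h \<in> VXs \<Longrightarrow> (last h, \<sigma>D D i h) \<in> EXs"
  using chs_spec by (simp add: \<sigma>D_def)

lemma BI_outcome:
  "\<forall>g. length g + n = D + 1 \<longrightarrow> g \<noteq> [] \<longrightarrow>
     (\<forall>p\<le>n. outcome own (restrict_profile (\<sigma>D D) (butlast g)) (last g) p = BI D n g p)"
proof (induction n)
  case 0 thus ?case by simp
next
  case (Suc n)
  show ?case
  proof (intro allI impI)
    fix g :: "('v \<times> 'p set) list" and p assume len: "length g + Suc n = D + 1" and gne: "g \<noteq> []"
      and p: "p \<le> Suc n"
    let ?\<rho> = "outcome own (restrict_profile (\<sigma>D D) (butlast g)) (last g)"
    let ?w = "chs D n g"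
    have gbv: "butlast g @ [last g] = g" using gne by simp
    have dn: "D - length g = n" using len by simp
    have r1: "?\<rho> 1 = ?w"
      using outcome_Suc[of own "restrict_profile (\<sigma>D D) (butlast g)" "last g" 0] dn gbv
      by (simp add: \<sigma>D_def)
    have sf: "suffix_play ?\<rho> 1 = outcome own (restrict_profile (\<sigma>D D) g) ?w"
      using outcome_suffix[of ?\<rho> own "\<sigma>D D" "butlast g" "last g" 1] r1 gbv by simp
    have IH: "\<forall>p\<le>n. outcome own (restrict_profile (\<sigma>D D) g) ?w p = BI D n (g @ [?w]) p"
      using Suc.IH[rule_format, of "g @ [?w]"] len by simp
    show "?\<rho> p = BI D (Suc n) g p"
    proof (cases p)
      case 0 thus ?thesis by (simp add: BI_Suc)
    next
      case (Suc q)
      have "?\<rho> p = suffix_play ?\<rho> 1 q" using Suc by simp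
      also have "\<dots> = BI D n (g @ [?w]) q" using sf IH p Suc by simp
      also have "\<dots> = BI D (Suc n) g p" using Suc by (simp add: BI_Suc)
      finally show ?thesis .
    qed
  qed
qed

lemma TNE:
  "\<forall>g \<rho>'. length g + n = D + 1 \<longrightarrow> g \<noteq> [] \<longrightarrow> is_play EXs \<rho>' \<longrightarrow> \<rho>' 0 = last g \<longrightarrow>
     (\<forall>m. own (\<rho>' m) \<noteq> j \<longrightarrow> \<rho>' (Suc m) = \<sigma>D D (own (\<rho>' m)) (butlast g @ map \<rho>' [0..<Suc m])) \<longrightarrow>
     tcost D j (prepend (butlast g) (BI D n g)) \<le> tcost D j (prepend (butlast g) \<rho>')"
proof (induction n)
  case 0
  show ?case
  proof (intro allI impI)
    fix g :: "('v \<times> 'p set) list" and \<rho>' assume len: "length g + 0 = D + 1" and gne: "g \<noteq> []" and pl: "is_play EXs \<rho>'" and r0: "\<rho>' 0 = last g"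
    have "\<forall>p\<le>D. prepend (butlast g) (BI D 0 g) p = prepend (butlast g) \<rho>' p"
      using len gne r0 by (auto simp: prepend_def)
    then have "tcost D j (prepend (butlast g) (BI D 0 g)) = tcost D j (prepend (butlast g) \<rho>')"
      by (rule tcost_agree)
    then show "tcost D j (prepend (butlast g) (BI D 0 g)) \<le> tcost D j (prepend (butlast g) \<rho>')" by simp
  qed
next
  case (Suc n)
  show ?case
  proof (intro allI impI)
    fix g :: "('v \<times> 'p set) list" and \<rho>' assume len: "length g + Suc n = D + 1" and gne: "g \<noteq> []" and pl: "is_play EXs \<rho>'"
      and r0: "\<rho>' 0 = last g"
      and cp: "\<forall>m. own (\<rho>' m) \<noteq> j \<longrightarrow> \<rho>' (Suc m) = \<sigma>D D (own (\<rho>' m)) (butlast g @ map \<rho>' [0..<Suc m])"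
    let ?b = "butlast g" and ?v = "last g"
    let ?w = "\<rho>' 1" and ?ws = "chs D n g"
    let ?\<rho>'' = "suffix_play \<rho>' 1"
    have gbv: "?b @ [?v] = g" using gne by simp
    have vVX: "?v \<in> VXs" using r0 pl play_VX by metis
    have e: "(?v, ?w) \<in> EXs" using pl r0 by (metis One_nat_def is_play_def)
    have p1: "prepend ?b (BI D (Suc n) g) = prepend g (BI D n (g @ [?ws]))"
      by (simp only: BI_Suc prepend_cons gbv)
    have p2: "prepend ?b \<rho>' = prepend g ?\<rho>''" using prepend_butlast[where g=g and \<rho>=\<rho>', OF gne r0] .
    have pl'': "is_play EXs ?\<rho>''" using pl by (simp add: is_play_def)
    have cp'': "\<forall>m. own (?\<rho>'' m) \<noteq> j \<longrightarrow> ?\<rho>'' (Suc m) = \<sigma>D D (own (?\<rho>'' m)) (butlast (g @ [?w]) @ map ?\<rho>'' [0..<Suc m])"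
    proof (intro allI impI)
      fix m assume "own (?\<rho>'' m) \<noteq> j"
      then have "\<rho>' (Suc (Suc m)) = \<sigma>D D (own (\<rho>' (Suc m))) (?b @ map \<rho>' [0..<Suc (Suc m)])"
        using cp by simp
      moreover have "?b @ map \<rho>' [0..<Suc (Suc m)] = g @ map ?\<rho>'' [0..<Suc m]"
        using map_upt_Suc_Suc[of \<rho>' m] r0 gbv by (metis append_Cons append_assoc self_append_conv2)
      moreover have o: "own (?\<rho>'' m) = own (\<rho>' (Suc m))" by simp
      moreover have "?\<rho>'' (Suc m) = \<rho>' (Suc (Suc m))" by simp
      ultimately show "?\<rho>'' (Suc m) = \<sigma>D D (own (?\<rho>'' m)) (butlast (g @ [?w]) @ map ?\<rho>'' [0..<Suc m])"
        by (simp only: butlast_snoc)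
    qed
    have IHw: "tcost D j (prepend g (BI D n (g @ [?w]))) \<le> tcost D j (prepend g ?\<rho>'')"
      using Suc.IH[rule_format, of "g @ [?w]" ?\<rho>''] len pl'' cp'' by simp
    show "tcost D j (prepend ?b (BI D (Suc n) g)) \<le> tcost D j (prepend ?b \<rho>')"
    proof (cases "own ?v = j")
      case False
      then have "?w = \<sigma>D D (own ?v) (?b @ map \<rho>' [0..<Suc 0])" using cp r0 by (metis One_nat_def)
      moreover have "D - length g = n" using len by simp
      ultimately have "?w = ?ws" using r0 gbv by (simp add: \<sigma>D_def)
      then show ?thesis using p1 p2 IHw by simp
    next
      case True
      have "tcost D j (prepend g (BI D n (g @ [?ws]))) \<le> tcost D j (prepend g (BI D n (g @ [?w])))"
        using chs_spec[OF vVX] e True by blast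
      then show ?thesis using p1 p2 IHw by simp
    qed
  qed
qed

end

lemma prepend_agree:
  assumes "\<forall>p\<le>M. x p = y p" "p \<le> length b + M"
  shows "prepend b x p = prepend b y p"
  using assms by (auto simp: prepend_def)

context xg
begin

lemma SPE_exists:
  assumes u0: "u0 \<in> VXs"
  shows "\<exists>\<sigma>. is_SPE Pi VXs own EXs FXs u0 \<sigma>"
proof -
  define K where "K L = {(i, h). i \<in> Pi \<and> set h \<subseteq> VXs \<and> h \<noteq> [] \<and> length h \<le> L}" for L
  have finK: "finite (K L)" for L
  proof (rule finite_subset)
    show "K L \<subseteq> Pi \<times> {h. set h \<subseteq> VXs \<and> length h \<le> L}" by (auto simp: K_def)
    show "finite (Pi \<times> {h. set h \<subseteq> VXs \<and> length h \<le> L})"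
      using fin_Pi finite_lists_length_le[OF fin_VX] by blast
  qed
  have monoK: "K L \<subseteq> K (Suc L)" for L by (auto simp: K_def)
  define s where "s D x = (case x of (i, h) \<Rightarrow> \<sigma>D D i h)" for D x
  have inB: "s d x \<in> VXs" if x: "x \<in> K L" for d L x
  proof -
    obtain i h where ih: "x = (i, h)" by fastforce
    then have "last h \<in> VXs" using x by (auto simp: K_def)
    then show ?thesis using EX_sub[OF \<sigma>D_succ[where D=d and i=i, OF \<open>last h \<in> VXs\<close>]] ih by (simp add: s_def)
  qed
  have "\<exists>t. \<forall>L D. \<exists>d\<ge>D. \<forall>x\<in>K L. s d x = t x"
    by (rule diag_limit[where K=K and s=s and B=VXs]) (use finK monoK fin_VX inB in blast)+
  then obtain t where t: "\<forall>L D. \<exists>d\<ge>D. \<forall>x\<in>K L. s d x = t x" by blast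
  define \<sigma> where "\<sigma> i h = t (i, h)" for i h
  have agree: "\<exists>d\<ge>D. \<forall>i h. i \<in> Pi \<and> set h \<subseteq> VXs \<and> h \<noteq> [] \<and> length h \<le> L \<longrightarrow> \<sigma>D d i h = \<sigma> i h" for L D
  proof -
    obtain d where d: "d \<ge> D" "\<forall>x\<in>K L. s d x = t x" using t by blast
    then show ?thesis by (intro exI[of _ d]) (auto simp: K_def s_def \<sigma>_def)
  qed
  have valid: "valid_profile Pi VXs own EXs \<sigma>"
    unfolding valid_profile_def valid_strategy_def
  proof (intro ballI allI impI)
    fix i h assume i: "i \<in> Pi" and h: "hist h \<and> own (last h) = i"
    obtain d where d: "\<forall>i' h'. i' \<in> Pi \<and> set h' \<subseteq> VXs \<and> h' \<noteq> [] \<and> length h' \<le> length h \<longrightarrow> \<sigma>D d i' h' = \<sigma> i' h'"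
      using agree[of 0 "length h"] by blast
    have hs: "set h \<subseteq> VXs" "h \<noteq> []" using h by (auto simp: is_hist_def)
    then have "\<sigma> i h = \<sigma>D d i h" using d i by simp
    then show "(last h, \<sigma> i h) \<in> EXs" using \<sigma>D_succ hist_last_VX h by simp
  qed
  have NE: "is_NE_sub Pi VXs own EXs FXs (butlast g) (last g) (restrict_profile \<sigma> (butlast g))" if g: "hist g" for g
    unfolding is_NE_sub_def
  proof (intro ballI allI impI)
    fix j \<tau> assume j: "j \<in> Pi" and \<tau>: "valid_strategy VXs own EXs j \<tau>"
    let ?b = "butlast g" and ?v = "last g"
    let ?\<rho> = "outcome own (restrict_profile \<sigma> ?b) ?v"
    let ?\<rho>' = "outcome own ((restrict_profile \<sigma> ?b)(j := \<tau>)) ?v"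
    show "cst j (prepend ?b ?\<rho>) \<le> cst j (prepend ?b ?\<rho>')"
    proof (rule ccontr)
      assume nle: "\<not> cst j (prepend ?b ?\<rho>) \<le> cst j (prepend ?b ?\<rho>')"
      obtain c where c: "cst j (prepend ?b ?\<rho>') = enat c"
        using nle by (cases "cst j (prepend ?b ?\<rho>')") auto
      define L where "L = length g + c + 1"
      obtain D where D: "D \<ge> L"
        and ag: "\<forall>i h. i \<in> Pi \<and> set h \<subseteq> VXs \<and> h \<noteq> [] \<and> length h \<le> L \<longrightarrow> \<sigma>D D i h = \<sigma> i h"
        using agree[of L L] by blast
      let ?\<rho>D = "outcome own (restrict_profile (\<sigma>D D) ?b) ?v"
      let ?\<rho>'D = "outcome own ((restrict_profile (\<sigma>D D) ?b)(j := \<tau>)) ?v"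
      have gne: "g \<noteq> []" using g by (simp add: is_hist_def)
      then have gbv: "?b @ [?v] = g" by simp
      have hg: "hist (?b @ [?v])" using g gbv by simp
      have lenb: "length ?b + 1 = length g" using gne by simp
      have hr: "hist (?b @ map ?\<rho> [0..<Suc m])" for m
        using outcome_play(2)[where b="?b" and v="?v" and \<sigma>'="restrict_profile \<sigma> ?b", OF valid_restrict[OF valid] hg] .
      have hr': "hist (?b @ map ?\<rho>' [0..<Suc m])" for m
        using outcome_play(2)[where b="?b" and v="?v" and \<sigma>'="(restrict_profile \<sigma> ?b)(j := \<tau>)",
            OF valid_restrict_upd[OF valid \<tau>] hg] .
      have vD: "\<forall>h. hist (?b @ h) \<and> h \<noteq> [] \<and> hd h = ?v \<longrightarrow>
          (last h, ((restrict_profile (\<sigma>D D) ?b)(j := \<tau>)) (own (last h)) h) \<in> EXs"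
      proof (intro allI impI)
        fix h assume h: "hist (?b @ h) \<and> h \<noteq> [] \<and> hd h = ?v"
        then have hh: "hist h" using hist_appD by blast
        show "(last h, ((restrict_profile (\<sigma>D D) ?b)(j := \<tau>)) (own (last h)) h) \<in> EXs"
        proof (cases "own (last h) = j")
          case True thus ?thesis using \<tau> hh unfolding valid_strategy_def by simp
        next
          case False
          have lb: "last (?b @ h) = last h" using h by simp
          then have "last (?b @ h) \<in> VXs" using hist_last_VX[OF hh] by simp
          then have "(last (?b @ h), \<sigma>D D (own (last h)) (?b @ h)) \<in> EXs" by (rule \<sigma>D_succ)
          then show ?thesis using False lb by simp
        qed
      qed
      have pl'D: "?\<rho>'D \<in> plays_from EXs ?v"
        using outcome_play(1)[where b="?b" and v="?v" and \<sigma>'="(restrict_profile (\<sigma>D D) ?b)(j := \<tau>)", OF vD hg] .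
      have inK: "i \<in> Pi \<and> set h \<subseteq> VXs \<and> h \<noteq> [] \<and> length h \<le> L"
        if "hist h" "i \<in> Pi" "length h \<le> L" for h i
        using that by (auto simp: is_hist_def)
      have agree1: "\<forall>p\<le>Suc c. ?\<rho> p = ?\<rho>D p"
      proof (rule outcome_agree[OF refl refl], intro allI impI)
        fix m assume m: "m < Suc c"
        let ?h = "?b @ map ?\<rho> [0..<Suc m]"
        have "own (?\<rho> m) \<in> Pi" using hr[of m] hist_last_VX own_Pi by (metis last_snoc map_upt_Suc append_assoc)
        moreover have "length ?h \<le> L" using m lenb by (simp add: L_def)
        ultimately have "\<sigma>D D (own (?\<rho> m)) ?h = \<sigma> (own (?\<rho> m)) ?h" using ag inK[OF hr[of m]] by blast
        then show "restrict_profile \<sigma> ?b (own (?\<rho> m)) (map ?\<rho> [0..<Suc m])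
              = restrict_profile (\<sigma>D D) ?b (own (?\<rho> m)) (map ?\<rho> [0..<Suc m])" by simp
      qed
      have agree2: "\<forall>p\<le>Suc c. ?\<rho>' p = ?\<rho>'D p"
      proof (rule outcome_agree[OF refl refl], intro allI impI)
        fix m assume m: "m < Suc c"
        let ?h = "?b @ map ?\<rho>' [0..<Suc m]"
        show "((restrict_profile \<sigma> ?b)(j := \<tau>)) (own (?\<rho>' m)) (map ?\<rho>' [0..<Suc m])
              = ((restrict_profile (\<sigma>D D) ?b)(j := \<tau>)) (own (?\<rho>' m)) (map ?\<rho>' [0..<Suc m])"
        proof (cases "own (?\<rho>' m) = j")
          case True thus ?thesis by simp
        next
          case False
          have "own (?\<rho>' m) \<in> Pi" using hr'[of m] hist_last_VX own_Pi by (metis last_snoc map_upt_Suc append_assoc)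
          moreover have "length ?h \<le> L" using m lenb by (simp add: L_def)
          ultimately have "\<sigma>D D (own (?\<rho>' m)) ?h = \<sigma> (own (?\<rho>' m)) ?h" using ag inK[OF hr'[of m]] by blast
          then show ?thesis using False by simp
        qed
      qed
      have cD: "c \<le> D" using D by (simp add: L_def)
      have c1: "cst j (prepend ?b ?\<rho>'D) \<le> enat c"
      proof -
        obtain p where p: "p \<le> c" "prepend ?b ?\<rho>' p \<in> FXs j" using c cost_le_iff[of FXs j "prepend ?b ?\<rho>'" c] by auto
        have "prepend ?b ?\<rho>' p = prepend ?b ?\<rho>'D p" by (rule prepend_agree[OF agree2]) (use p in simp)
        then show ?thesis using p cost_le_iff by metis
      qed
      have c2: "\<not> cst j (prepend ?b ?\<rho>D) \<le> enat c"
      proof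
        assume "cst j (prepend ?b ?\<rho>D) \<le> enat c"
        then obtain p where p: "p \<le> c" "prepend ?b ?\<rho>D p \<in> FXs j" using cost_le_iff by metis
        have "prepend ?b ?\<rho> p = prepend ?b ?\<rho>D p" by (rule prepend_agree[OF agree1]) (use p in simp)
        then have "cst j (prepend ?b ?\<rho>) \<le> enat c" using p cost_le_iff by metis
        then show False using nle c by simp
      qed
      let ?n = "D + 1 - length g"
      have lgn: "length g + ?n = D + 1" using D by (simp add: L_def)
      have cpD: "\<forall>m. own (?\<rho>'D m) \<noteq> j \<longrightarrow> ?\<rho>'D (Suc m) = \<sigma>D D (own (?\<rho>'D m)) (?b @ map ?\<rho>'D [0..<Suc m])"
        using outcome_Suc[of own "(restrict_profile (\<sigma>D D) ?b)(j := \<tau>)" ?v] by simp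
      have pl'D2: "is_play EXs ?\<rho>'D" "?\<rho>'D 0 = ?v" using pl'D by (auto simp: plays_from_def)
      have t1: "tcost D j (prepend ?b (BI D ?n g)) \<le> tcost D j (prepend ?b ?\<rho>'D)"
        using TNE[rule_format, OF lgn gne pl'D2 cpD[rule_format]] .
      have t2: "tcost D j (prepend ?b ?\<rho>'D) \<le> enat c" using tcost_le[OF c1 cD] .
      have BIo: "\<forall>p\<le>?n. ?\<rho>D p = BI D ?n g p" using BI_outcome[rule_format, OF lgn gne] by blast
      have "\<forall>p\<le>D. prepend ?b ?\<rho>D p = prepend ?b (BI D ?n g) p"
      proof (intro allI impI)
        fix p assume "p \<le> D"
        then show "prepend ?b ?\<rho>D p = prepend ?b (BI D ?n g) p"
          by (intro prepend_agree[OF BIo]) (use lenb lgn in simp)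
      qed
      then have "tcost D j (prepend ?b ?\<rho>D) = tcost D j (prepend ?b (BI D ?n g))" by (rule tcost_agree)
      then have "cst j (prepend ?b ?\<rho>D) \<le> enat c" using t1 t2 tcost_ge[of j "prepend ?b ?\<rho>D" D] by simp
      then show False using c2 by simp
    qed
  qed
  have "is_SPE Pi VXs own EXs FXs u0 \<sigma>" unfolding is_SPE_def using valid NE by blast
  then show ?thesis by blast
qed

lemma Lam_nonempty:
  assumes "u \<in> VXs"
  shows "Lm (fst (lam_seq Pi V owner E F J N k)) u \<noteq> {}"
proof -
  obtain \<sigma> where spe: "is_SPE Pi VXs own EXs FXs u \<sigma>" using SPE_exists[OF assms] by blast
  have "outcome own (restrict_profile \<sigma> (butlast [u])) (last [u]) \<in> Lm (fst (lam_seq Pi V owner E F J N k)) (last [u])"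
    using SPE_consistent[OF spe, rule_format, of "[u]"] assms by simp
  then show ?thesis by auto
qed

lemma Lam_SUP_attained:
  assumes ne: "Lm lam u \<noteq> {}"
  shows "\<exists>\<rho>\<in>Lm lam u. cst i \<rho> = (SUP \<rho>\<in>Lm lam u. cst i \<rho>)"
proof (cases "finite (cst i ` Lm lam u)")
  case True
  have "(SUP \<rho>\<in>Lm lam u. cst i \<rho>) = Max (cst i ` Lm lam u)" using True ne by (simp add: Sup_enat_def)
  moreover have "Max (cst i ` Lm lam u) \<in> cst i ` Lm lam u" using True ne by (simp add: Max_in)
  ultimately show ?thesis by auto
next
  case False
  have sup: "(SUP \<rho>\<in>Lm lam u. cst i \<rho>) = \<infinity>" using False ne by (simp add: Sup_enat_def)
  have unb: "\<exists>\<rho>. \<rho> \<in> Lm lam u \<and> enat n < cst i \<rho>" for n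
  proof (rule ccontr)
    assume "\<nexists>\<rho>. \<rho> \<in> Lm lam u \<and> enat n < cst i \<rho>"
    then have "\<And>y. y \<in> cst i ` Lm lam u \<Longrightarrow> y \<le> enat n" by (auto simp: not_less)
    then have "finite (cst i ` Lm lam u)" by (rule finite_enat_bounded)
    then show False using False by simp
  qed
  then have "\<forall>n. \<exists>\<rho>. \<rho> \<in> Lm lam u \<and> enat n < cst i \<rho>" by blast
  from choice[OF this] obtain R where R: "\<forall>n. R n \<in> Lm lam u \<and> enat n < cst i (R n)" by blast
  have Rpl: "R n \<in> plays_from EXs u" for n using R by (simp add: Lam_def)
  have inB: "R d p \<in> VXs" if "p \<in> {..L}" for d L p
    using Rpl[of d] play_VX by (simp add: plays_from_def)
  obtain \<rho> where lim: "\<forall>L D. \<exists>d\<ge>D. \<forall>p\<in>{..L}. R d p = \<rho> p"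
    using diag_limit[where K="\<lambda>L. {..L}" and s=R and B=VXs] fin_VX inB by fastforce
  have pl: "\<rho> \<in> plays_from EXs u"
  proof -
    have "\<rho> 0 = u" using lim[rule_format, of 0 0] Rpl by (auto simp: plays_from_def)
    moreover have "(\<rho> n, \<rho> (Suc n)) \<in> EXs" for n
    proof -
      obtain d where "\<forall>p\<in>{..Suc n}. R d p = \<rho> p" using lim by blast
      then have "R d n = \<rho> n" "R d (Suc n) = \<rho> (Suc n)" by auto
      moreover have "is_play EXs (R d)" using Rpl[of d] by (simp add: plays_from_def)
      then have "(R d n, R d (Suc n)) \<in> EXs" by (simp add: is_play_def)
      ultimately show ?thesis by simp
    qed
    ultimately show ?thesis by (simp add: plays_from_def is_play_def)
  qed
  have cons: "cst (own (\<rho> n)) (suffix_play \<rho> n) \<le> lam (\<rho> n)" for n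
  proof (cases "lam (\<rho> n)")
    case (enat c')
    obtain d where d: "\<forall>p\<in>{..n + c'}. R d p = \<rho> p" using lim by blast
    have "R d \<in> Lm lam u" using R by blast
    then have "cst (own (R d n)) (suffix_play (R d) n) \<le> lam (R d n)" by (simp add: Lam_def)
    moreover have "R d n = \<rho> n" using d by simp
    ultimately have "cst (own (\<rho> n)) (suffix_play (R d) n) \<le> enat c'" using enat by simp
    then obtain p where p: "p \<le> c'" "R d (n + p) \<in> FXs (own (\<rho> n))" using cost_le_iff[of FXs] by fastforce
    then have "\<rho> (n + p) \<in> FXs (own (\<rho> n))" using d by simp
    then have "cst (own (\<rho> n)) (suffix_play \<rho> n) \<le> enat c'" using p cost_le_iff[of FXs] by fastforce
    then show ?thesis using enat by simp
  qed simp
  have inL: "\<rho> \<in> Lm lam u" using pl cons by (simp add: Lam_def)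
  have "cst i \<rho> = \<infinity>"
  proof (rule ccontr)
    assume "cst i \<rho> \<noteq> \<infinity>"
    then obtain c where "cst i \<rho> = enat c" by auto
    then obtain p where p: "p \<le> c" "\<rho> p \<in> FXs i" using cost_le_iff[of FXs i \<rho> c] by auto
    obtain d where d: "d \<ge> c" "\<forall>q\<in>{..c}. R d q = \<rho> q" using lim by blast
    have "R d p \<in> FXs i" using d p by simp
    then have "\<exists>q\<le>d. R d q \<in> FXs i" using p d by (intro exI[of _ p]) simp
    then have "cst i (R d) \<le> enat d" using cost_le_iff[of FXs i "R d" d] by simp
    then show False using R by (meson leD)
  qed
  then show ?thesis using inL sup by auto
qed

end

fun plan_rev :: "(nat \<Rightarrow> 'a) \<Rightarrow> ('a \<Rightarrow> 'a \<Rightarrow> nat \<Rightarrow> 'a) \<Rightarrow> 'a list \<Rightarrow> nat \<Rightarrow> 'a" where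
  "plan_rev r0 pun [] = r0"
| "plan_rev r0 pun [x] = r0"
| "plan_rev r0 pun (w # x # r) =
     (let \<pi> = plan_rev r0 pun (x # r) in if w = \<pi> 1 then suffix_play \<pi> 1 else pun x w)"

lemma plan_snoc:
  assumes "g \<noteq> []"
  shows "plan_rev r0 pun (rev (g @ [w])) =
    (if w = plan_rev r0 pun (rev g) 1 then suffix_play (plan_rev r0 pun (rev g)) 1
     else pun (last g) w)"
proof -
  obtain x r where xr: "rev g = x # r" using assms by (cases "rev g") auto
  then have "last g = x" by (metis last_rev list.sel(1) rev_rev_ident)
  then show ?thesis using xr by simp
qed

lemma plan_single: "plan_rev r0 pun (rev [x]) = r0" by simp

context xg
begin

definition pun :: "('v, 'p) labeling \<Rightarrow> 'v \<times> 'p set \<Rightarrow> 'v \<times> 'p set \<Rightarrow> nat \<Rightarrow> 'v \<times> 'p set" where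
  "pun lam x w = (SOME \<pi>. \<pi> \<in> Lm lam w \<and> lam x \<le> 1 + cst (own x) \<pi>)"

lemma SPE_from_consistent:
  assumes xs: "xs \<in> VXs" and r0: "\<rho>0 \<in> Lm lam xs"
    and H2: "\<forall>x w. (xs, x) \<in> EXs\<^sup>* \<longrightarrow> (x, w) \<in> EXs \<longrightarrow> (\<exists>\<pi> \<in> Lm lam w. lam x \<le> 1 + cst (own x) \<pi>)"
  shows "\<exists>\<sigma>. is_SPE Pi VXs own EXs FXs xs \<sigma> \<and> outcome own \<sigma> xs = \<rho>0"
proof -
  define P where "P g = plan_rev \<rho>0 (pun lam) (rev g)" for g
  have Psnoc: "g \<noteq> [] \<Longrightarrow> P (g @ [w]) = (if w = P g 1 then suffix_play (P g) 1 else pun lam (last g) w)" for g w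
    unfolding P_def by (rule plan_snoc)
  have Psingle: "P [x] = \<rho>0" for x unfolding P_def by simp
  have punp: "pun lam x w \<in> Lm lam w \<and> lam x \<le> 1 + cst (own x) (pun lam x w)"
    if "(xs, x) \<in> EXs\<^sup>*" "(x, w) \<in> EXs" for x w
  proof -
    have "\<exists>\<pi>. \<pi> \<in> Lm lam w \<and> lam x \<le> 1 + cst (own x) \<pi>" using H2 that by blast
    then show ?thesis unfolding pun_def by (rule someI_ex)
  qed
  have INV: "hist g \<and> hd g = xs \<longrightarrow> (xs, last g) \<in> EXs\<^sup>* \<and> P g \<in> Lm lam (last g)" for g
  proof (induction g rule: rev_induct)
    case Nil thus ?case by (simp add: is_hist_def)
  next
    case (snoc w g)
    show ?case
    proof (intro impI)
      assume h: "hist (g @ [w]) \<and> hd (g @ [w]) = xs"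
      show "(xs, last (g @ [w])) \<in> EXs\<^sup>* \<and> P (g @ [w]) \<in> Lm lam (last (g @ [w]))"
      proof (cases "g = []")
        case True
        then show ?thesis using h r0 Psingle by simp
      next
        case False
        then have hg: "hist g" and e: "(last g, w) \<in> EXs" using h hist_snoc by auto
        have "hd g = xs" using h False by simp
        then have IH: "(xs, last g) \<in> EXs\<^sup>*" "P g \<in> Lm lam (last g)" using snoc.IH hg by auto
        have reach: "(xs, w) \<in> EXs\<^sup>*" using IH(1) e by (rule rtrancl_into_rtrancl)
        have "P (g @ [w]) \<in> Lm lam w"
        proof (cases "w = P g 1")
          case True
          then have "P (g @ [w]) = suffix_play (P g) 1" using Psnoc[OF False] by simp
          then show ?thesis using Lam_suffix[OF IH(2), of 1] True by simp
        next
          case F2: False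
          then have "P (g @ [w]) = pun lam (last g) w" using Psnoc[OF False] by simp
          then show ?thesis using punp[OF IH(1) e] by simp
        qed
        then show ?thesis using reach by simp
      qed
    qed
  qed
  have Ppl: "P g \<in> plays_from EXs (last g)" if "hist g" "hd g = xs" for g
    using INV[of g] that by (simp add: Lam_def)
  define \<sigma> where "\<sigma> i h = (if hist h \<and> hd h = xs then P h 1 else succ_of (last h))" for i :: 'p and h
  have valid: "valid_profile Pi VXs own EXs \<sigma>"
    unfolding valid_profile_def valid_strategy_def
  proof (intro ballI allI impI)
    fix i h assume h: "hist h \<and> own (last h) = i"
    show "(last h, \<sigma> i h) \<in> EXs"
    proof (cases "hd h = xs")
      case True
      then have "P h \<in> plays_from EXs (last h)" using Ppl h by blast
      then have "\<forall>n. (P h n, P h (Suc n)) \<in> EXs" "P h 0 = last h" by (auto simp: plays_from_def is_play_def)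
      then have "(last h, P h 1) \<in> EXs" by (metis One_nat_def)
      moreover have "\<sigma> i h = P h 1" using h True by (simp add: \<sigma>_def)
      ultimately show ?thesis by simp
    next
      case False
      then show ?thesis using h succ_of hist_last_VX by (simp add: \<sigma>_def)
    qed
  qed
  have OUT: "outcome own (restrict_profile \<sigma> (butlast g)) (last g) = P g" if g: "hist g" "hd g = xs" for g
  proof (rule outcome_unique)
    let ?\<rho> = "P g" and ?b = "butlast g"
    have pl: "?\<rho> \<in> plays_from EXs (last g)" using Ppl g by blast
    show "?\<rho> 0 = last g" using pl by (simp add: plays_from_def)
    have gne: "g \<noteq> []" using g by (simp add: is_hist_def)
    have C: "hist (?b @ map ?\<rho> [0..<Suc n]) \<and> hd (?b @ map ?\<rho> [0..<Suc n]) = xs \<and>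
             P (?b @ map ?\<rho> [0..<Suc n]) = suffix_play ?\<rho> n" for n
    proof (induction n)
      case 0
      have "?b @ map ?\<rho> [0..<Suc 0] = g" using gne \<open>?\<rho> 0 = last g\<close> by simp
      then show ?case using g by simp
    next
      case (Suc n)
      let ?gn = "?b @ map ?\<rho> [0..<Suc n]"
      have eq: "?b @ map ?\<rho> [0..<Suc (Suc n)] = ?gn @ [?\<rho> (Suc n)]" by simp
      have ne: "?gn \<noteq> []" by simp
      have e: "(?\<rho> n, ?\<rho> (Suc n)) \<in> EXs" using pl by (simp add: plays_from_def is_play_def)
      have "last ?gn = ?\<rho> n" by simp
      then have h1: "hist (?gn @ [?\<rho> (Suc n)])" using Suc.IH e hist_snoc[OF ne] by simp
      have "hd (?gn @ [?\<rho> (Suc n)]) = hd ?gn" by (rule hd_append2[OF ne])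
      moreover have "hd ?gn = xs" using Suc.IH by blast
      ultimately have h2: "hd (?gn @ [?\<rho> (Suc n)]) = xs" by simp
      have Pgn: "P ?gn = suffix_play ?\<rho> n" using Suc.IH by blast
      have "P ?gn 1 = suffix_play ?\<rho> n 1" by (simp only: Pgn)
      also have "\<dots> = ?\<rho> (Suc n)" by simp
      finally have "P ?gn 1 = ?\<rho> (Suc n)" .
      then have "P (?gn @ [?\<rho> (Suc n)]) = suffix_play (P ?gn) 1" using Psnoc[OF ne, of "?\<rho> (Suc n)"] by simp
      also have "\<dots> = suffix_play (suffix_play ?\<rho> n) 1" by (simp only: Pgn)
      also have "\<dots> = suffix_play ?\<rho> (Suc n)" by (simp only: suffix_suffix Suc_eq_plus1)
      finally have h3: "P (?gn @ [?\<rho> (Suc n)]) = suffix_play ?\<rho> (Suc n)" .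
      show ?case using h1 h2 h3 eq by simp
    qed
    show "\<forall>n. ?\<rho> (Suc n) = restrict_profile \<sigma> ?b (own (?\<rho> n)) (map ?\<rho> [0..<Suc n])"
    proof
      fix n
      have "restrict_profile \<sigma> ?b (own (?\<rho> n)) (map ?\<rho> [0..<Suc n]) = P (?b @ map ?\<rho> [0..<Suc n]) 1"
        using C[of n] by (simp del: upt_Suc add: \<sigma>_def)
      also have "\<dots> = ?\<rho> (Suc n)" using C[of n] by simp
      finally show "?\<rho> (Suc n) = restrict_profile \<sigma> ?b (own (?\<rho> n)) (map ?\<rho> [0..<Suc n])" by simp
    qed
  qed
  have KEY: "\<forall>g \<rho>'. hist g \<and> hd g = xs \<and> \<rho>' \<in> plays_from EXs (last g) \<and>
      (\<forall>n. own (\<rho>' n) \<noteq> j \<longrightarrow> \<rho>' (Suc n) = \<sigma> (own (\<rho>' n)) (butlast g @ map \<rho>' [0..<Suc n])) \<and>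
      cst j \<rho>' = enat c \<longrightarrow> cst j (P g) \<le> enat c" for j c
  proof (induction c)
    case 0
    show ?case
    proof (intro allI impI)
      fix g \<rho>' assume a: "hist g \<and> hd g = xs \<and> \<rho>' \<in> plays_from EXs (last g) \<and>
        (\<forall>n. own (\<rho>' n) \<noteq> j \<longrightarrow> \<rho>' (Suc n) = \<sigma> (own (\<rho>' n)) (butlast g @ map \<rho>' [0..<Suc n])) \<and>
        cst j \<rho>' = enat 0"
      then have "\<rho>' 0 \<in> FXs j" using cost_0_iff[of FXs j \<rho>'] by (simp add: zero_enat_def)
      moreover have "\<rho>' 0 = last g" "P g 0 = last g" using a Ppl by (auto simp: plays_from_def)
      ultimately have "cst j (P g) = 0" using cost_0_iff by metis
      then show "cst j (P g) \<le> enat 0" by (simp add: zero_enat_def)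
    qed
  next
    case (Suc c)
    show ?case
    proof (intro allI impI)
      fix g \<rho>' assume a: "hist g \<and> hd g = xs \<and> \<rho>' \<in> plays_from EXs (last g) \<and>
        (\<forall>n. own (\<rho>' n) \<noteq> j \<longrightarrow> \<rho>' (Suc n) = \<sigma> (own (\<rho>' n)) (butlast g @ map \<rho>' [0..<Suc n])) \<and>
        cst j \<rho>' = enat (Suc c)"
      have g: "hist g" "hd g = xs" using a by auto
      have gne: "g \<noteq> []" using g by (simp add: is_hist_def)
      have r0': "\<rho>' 0 = last g" and plr: "is_play EXs \<rho>'" using a by (auto simp: plays_from_def)
      have cp: "\<forall>n. own (\<rho>' n) \<noteq> j \<longrightarrow> \<rho>' (Suc n) = \<sigma> (own (\<rho>' n)) (butlast g @ map \<rho>' [0..<Suc n])"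
        using a by blast
      have Pg: "P g \<in> Lm lam (last g)" "(xs, last g) \<in> EXs\<^sup>*" using INV g by auto
      have Pg0: "P g 0 = last g" using Pg by (simp add: Lam_def plays_from_def)
      show "cst j (P g) \<le> enat (Suc c)"
      proof (cases "\<rho>' 0 \<in> FXs j")
        case True
        then have "cst j (P g) = 0" using r0' Pg0 cost_0_iff by metis
        then show ?thesis by simp
      next
        case notF: False
        have "cst j \<rho>' = eSuc (cst j (suffix_play \<rho>' 1))" using notF cost_unfold1[of FXs j \<rho>'] by simp
        then have cs: "cst j (suffix_play \<rho>' 1) = enat c" using a by (simp add: eSuc_enat[symmetric])
        let ?w = "\<rho>' 1" and ?g' = "g @ [\<rho>' 1]"
        have e: "(last g, ?w) \<in> EXs" using plr r0' by (metis One_nat_def is_play_def)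
        have hg': "hist ?g'" using g e hist_snoc[OF gne] by simp
        have hd': "hd ?g' = xs" using g gne by simp
        have pl': "suffix_play \<rho>' 1 \<in> plays_from EXs (last ?g')" using plr by (simp add: plays_from_def is_play_def)
        have cp': "\<forall>n. own (suffix_play \<rho>' 1 n) \<noteq> j \<longrightarrow> suffix_play \<rho>' 1 (Suc n) =
             \<sigma> (own (suffix_play \<rho>' 1 n)) (butlast ?g' @ map (suffix_play \<rho>' 1) [0..<Suc n])"
        proof (intro allI impI)
          fix n assume "own (suffix_play \<rho>' 1 n) \<noteq> j"
          then have "own (\<rho>' (Suc n)) \<noteq> j" by simp
          then have A: "\<rho>' (Suc (Suc n)) = \<sigma> (own (\<rho>' (Suc n))) (butlast g @ map \<rho>' [0..<Suc (Suc n)])"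
            using cp by blast
          have B: "butlast g @ map \<rho>' [0..<Suc (Suc n)] = g @ map (suffix_play \<rho>' 1) [0..<Suc n]"
            using map_upt_Suc_Suc[of \<rho>' n] r0' gne by (metis append_Cons append_assoc self_append_conv2 append_butlast_last_id)
          have o: "own (suffix_play \<rho>' 1 n) = own (\<rho>' (Suc n))" by simp
          have s1: "suffix_play \<rho>' 1 (Suc n) = \<rho>' (Suc (Suc n))" by simp
          show "suffix_play \<rho>' 1 (Suc n) = \<sigma> (own (suffix_play \<rho>' 1 n)) (butlast ?g' @ map (suffix_play \<rho>' 1) [0..<Suc n])"
            using A by (simp only: s1 o butlast_snoc B)
        qed
        have IH: "cst j (P ?g') \<le> enat c" using Suc.IH hg' hd' pl' cp' cs by blast
        show ?thesis
        proof (cases "?w = P g 1")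
          case True
          then have "P ?g' = suffix_play (P g) 1" using Psnoc[OF gne] by simp
          then have "cst j (P g) \<le> eSuc (cst j (P ?g'))" using cost_suffix1[of FXs j "P g"] by simp
          also have "\<dots> \<le> eSuc (enat c)" using IH by simp
          finally have "cst j (P g) \<le> eSuc (enat c)" .
          then show ?thesis by (simp add: eSuc_enat)
        next
          case False
          have ownj: "own (last g) = j"
          proof (rule ccontr)
            assume "own (last g) \<noteq> j"
            then have "?w = \<sigma> (own (\<rho>' 0)) (butlast g @ map \<rho>' [0..<Suc 0])" using cp r0' by (metis One_nat_def)
            also have "butlast g @ map \<rho>' [0..<Suc 0] = g" using r0' gne by simp
            finally have "?w = P g 1" using g by (simp add: \<sigma>_def)
            then show False using False by simp
          qed
          have "P ?g' = pun lam (last g) ?w" using Psnoc[OF gne] False by simp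
          then have "lam (last g) \<le> 1 + cst j (P ?g')" using punp[OF Pg(2) e] ownj by simp
          also have "\<dots> \<le> 1 + enat c" using IH by (simp add: add_left_mono)
          finally have l1: "lam (last g) \<le> enat (Suc c)" by (simp add: one_enat_def)
          have "\<forall>n. cst (own (P g n)) (suffix_play (P g) n) \<le> lam (P g n)" using Pg(1) by (simp add: Lam_def)
          then have "cst (own (P g 0)) (suffix_play (P g) 0) \<le> lam (P g 0)" by blast
          then have "cst j (P g) \<le> lam (last g)" using Pg0 ownj by simp
          then show ?thesis using l1 by simp
        qed
      qed
    qed
  qed
  have NE: "is_NE_sub Pi VXs own EXs FXs (butlast g) (last g) (restrict_profile \<sigma> (butlast g))"
    if g: "hist g" "hd g = xs" for g
    unfolding is_NE_sub_def
  proof (intro ballI allI impI)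
    fix j \<tau> assume j: "j \<in> Pi" and \<tau>: "valid_strategy VXs own EXs j \<tau>"
    let ?b = "butlast g" and ?v = "last g"
    let ?\<rho>' = "outcome own ((restrict_profile \<sigma> ?b)(j := \<tau>)) ?v"
    have gne: "g \<noteq> []" using g by (simp add: is_hist_def)
    then have hg: "hist (?b @ [?v])" using g by simp
    have pl': "?\<rho>' \<in> plays_from EXs ?v"
      using outcome_play(1)[where b="?b" and v="?v" and \<sigma>'="(restrict_profile \<sigma> ?b)(j := \<tau>)",
            OF valid_restrict_upd[OF valid \<tau>] hg] .
    have cp: "\<forall>n. own (?\<rho>' n) \<noteq> j \<longrightarrow> ?\<rho>' (Suc n) = \<sigma> (own (?\<rho>' n)) (?b @ map ?\<rho>' [0..<Suc n])"
      using outcome_Suc[of own "(restrict_profile \<sigma> ?b)(j := \<tau>)" ?v] by simp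
    have "cst j (P g) \<le> cst j ?\<rho>'"
    proof (cases "cst j ?\<rho>'")
      case (enat c)
      then have "cst j (P g) \<le> enat c" using KEY[of j c] g pl' cp by blast
      then show ?thesis using enat by simp
    qed simp
    then show "cst j (prepend ?b (outcome own (restrict_profile \<sigma> ?b) ?v)) \<le> cst j (prepend ?b ?\<rho>')"
      using OUT[OF g] prepend_mono by metis
  qed
  have spe: "is_SPE Pi VXs own EXs FXs xs \<sigma>" unfolding is_SPE_def using valid NE by blast
  have "outcome own \<sigma> xs = \<rho>0" using OUT[of "[xs]"] xs Psingle by simp
  then show ?thesis using spe by blast
qed

end

context xg
begin

lemma main_equiv:
  assumes v0: "v0 \<in> V" and lin: "linear_ext Pi V E F v0 J"
  shows "(\<exists>\<sigma>. is_SPE Pi VXs own EXs FXs (x0 Pi F v0) \<sigma> \<and> outcome own \<sigma> (x0 Pi F v0) = \<rho>0)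
         \<longleftrightarrow> \<rho>0 \<in> Lm (lam_star Pi V owner E F v0 J) (x0 Pi F v0)"
proof -
  let ?xs = "x0 Pi F v0"
  let ?RS = "reach_sets Pi V E F v0"
  let ?N = "card ?RS"
  let ?ks = "LEAST k. \<forall>m. fst (ls J ?N (k + m)) = fst (ls J ?N k)"
  let ?L = "fst (ls J ?N ?ks)"
  have xsVX: "?xs \<in> VXs" using v0 by (auto simp: x0_def VX_def)
  have reachVX: "(?xs, u) \<in> EXs\<^sup>* \<Longrightarrow> u \<in> VXs" for u
    by (induction rule: rtrancl_induct) (use xsVX EX_sub in auto)
  have RSsub: "?RS \<subseteq> Pow Pi"
  proof
    fix I assume "I \<in> ?RS"
    then obtain v where "(?xs, (v, I)) \<in> EXs\<^sup>*" by (auto simp: reach_sets_def)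
    then have "(v, I) \<in> VXs" by (rule reachVX)
    then show "I \<in> Pow Pi" by (simp add: VX_def)
  qed
  have finRS: "finite ?RS" using RSsub fin_Pi by (meson finite_Pow_iff finite_subset)
  have "snd ?xs \<in> ?RS" unfolding reach_sets_def by (cases ?xs) auto
  then have N1: "1 \<le> ?N" using finRS by (metis One_nat_def Suc_leI card_gt_0_iff empty_iff)
  have bij: "bij_betw J {1..?N} ?RS" using lin by (simp add: linear_ext_def)
  have JPi: "\<forall>m\<in>{1..?N}. J m \<subseteq> Pi" using bij RSsub by (auto dest: bij_betw_apply)
  have reachVge: "u \<in> Vge V J ?N 1" if "(?xs, u) \<in> EXs\<^sup>*" for u
  proof -
    obtain v I where u: "u = (v, I)" by fastforce
    have "u \<in> VXs" using that by (rule reachVX)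
    then have vV: "v \<in> V" using u by (simp add: VX_def)
    have "I \<in> ?RS" using that u by (auto simp: reach_sets_def)
    then obtain m where "m \<in> {1..?N}" "J m = I" using bij by (metis bij_betw_def imageE)
    then show ?thesis using u vV by (auto simp: Vge_def)
  qed
  have LS: "lam_star Pi V owner E F v0 J = ?L" by (simp add: lam_star_def Let_def)
  have FIX: "lam_update Pi V owner E F J ?N 1 ?L = ?L" using S5[OF JPi N1] by simp
  show ?thesis
  proof
    assume "\<exists>\<sigma>. is_SPE Pi VXs own EXs FXs ?xs \<sigma> \<and> outcome own \<sigma> ?xs = \<rho>0"
    then obtain \<sigma> where spe: "is_SPE Pi VXs own EXs FXs ?xs \<sigma>" and out: "outcome own \<sigma> ?xs = \<rho>0" by blast
    have "outcome own (restrict_profile \<sigma> (butlast [?xs])) (last [?xs]) \<in> Lm (fst (ls J ?N ?ks)) (last [?xs])"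
      using SPE_consistent[OF spe, rule_format, of "[?xs]"] xsVX by simp
    then show "\<rho>0 \<in> Lm (lam_star Pi V owner E F v0 J) ?xs" using out LS by simp
  next
    assume r0: "\<rho>0 \<in> Lm (lam_star Pi V owner E F v0 J) ?xs"
    have H2: "\<forall>x w. (?xs, x) \<in> EXs\<^sup>* \<longrightarrow> (x, w) \<in> EXs \<longrightarrow> (\<exists>\<pi> \<in> Lm ?L w. ?L x \<le> 1 + cst (own x) \<pi>)"
    proof (intro allI impI)
      fix x w assume rx: "(?xs, x) \<in> EXs\<^sup>*" and e: "(x, w) \<in> EXs"
      have xV: "x \<in> Vge V J ?N 1" using reachVge[OF rx] .
      have wVX: "w \<in> VXs" using EX_sub[OF e] by simp
      have ne: "Lm ?L w \<noteq> {}" using Lam_nonempty[OF wVX] .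
      have Lx: "?L x = lam_update Pi V owner E F J ?N 1 ?L x" using FIX by simp
      show "\<exists>\<pi> \<in> Lm ?L w. ?L x \<le> 1 + cst (own x) \<pi>"
      proof (cases "own x \<in> snd x")
        case True
        then have "?L x = 0" using Lx xV by (simp add: lam_update_def)
        then show ?thesis using ne by auto
      next
        case False
        obtain \<pi> where \<pi>: "\<pi> \<in> Lm ?L w" "cst (own x) \<pi> = (SUP \<rho>\<in>Lm ?L w. cst (own x) \<rho>)"
          using Lam_SUP_attained[OF ne] by blast
        have "?L x = 1 + (INF u'\<in>{u'. (x, u') \<in> EXs}. SUP \<rho>\<in>Lm ?L u'. cst (own x) \<rho>)"
          using Lx xV False by (simp add: lam_update_def)
        also have "\<dots> \<le> 1 + (SUP \<rho>\<in>Lm ?L w. cst (own x) \<rho>)"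
          by (rule add_left_mono, rule INF_lower) (use e in simp)
        also have "\<dots> = 1 + cst (own x) \<pi>" using \<pi> by simp
        finally show ?thesis using \<pi> by blast
      qed
    qed
    have "\<rho>0 \<in> Lm ?L ?xs" using r0 LS by simp
    then show "\<exists>\<sigma>. is_SPE Pi VXs own EXs FXs ?xs \<sigma> \<and> outcome own \<sigma> ?xs = \<rho>0"
      using SPE_from_consistent[OF xsVX _ H2] by blast
  qed
qed

end

theorem theorem2p10:
  fixes Pi :: "'p set" and V :: "'v set" and owner :: "'v \<Rightarrow> 'p"
    and E :: "('v \<times> 'v) set" and F :: "'p \<Rightarrow> 'v set" and v0 :: 'v
    and J :: "nat \<Rightarrow> 'p set" and \<rho>0 :: "nat \<Rightarrow> 'v \<times> 'p set"
  assumes "arena Pi V owner E"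
    and "\<forall>i\<in>Pi. F i \<subseteq> V"
    and "v0 \<in> V"
    and "linear_ext Pi V E F v0 J"
    and "\<rho>0 \<in> plays_from (EdgeX Pi V E F) (x0 Pi F v0)"
  shows "(\<exists>\<sigma>. is_SPE Pi (VX Pi V) (ownerX owner) (EdgeX Pi V E F) (FX Pi V) (x0 Pi F v0) \<sigma>
              \<and> outcome (ownerX owner) \<sigma> (x0 Pi F v0) = \<rho>0)
         \<longleftrightarrow> \<rho>0 \<in> Lam Pi V owner E F (lam_star Pi V owner E F v0 J) (x0 Pi F v0)"
proof -
  interpret xg Pi V owner E F using assms(1,2) by unfold_locales
  show ?thesis using main_equiv[OF assms(3,4)] by simp
qed

end
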